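(* Let $S^0$ be a left ample adequate semigroup with semilattice of idempotents $E^0$, and let $I=\bigcup_{x\in E^0}L_x$ be a left regular band with semilattice transversal $E^0$. Suppose there is a left action $S^0\times I\to I$, $(x,e)\mapsto x\ast e$ (so $(xy)\ast e=x\ast(y\ast e)$), distributive over the multiplication of $I$ (so $x\ast(ef)=(x\ast e)(x\ast f)$), satisfying: 1. for all $x,y\in S^0$, $x\ast y^+=(xy)^+$; 2. if $x,x_1,x_2\in S^0$, $e_1\in L_{x_1^+}$, $e_2\in L_{x_2^+}$ and $x^+(x\ast e_1)=x^+(x\ast e_2)$ and $xx_1=xx_2$, then $x^\ast\ast e_1=x^\ast\ast e_2$ and $x^\ast x_1=x^\ast x_2$. Define on $W=\{(e,x)\in I\times S^0: e\in L_{x^+}\}$ the multiplication $(e,x)(g,y)=(e(x\ast g),xy)$. Then $W$ is a left adequate, quasi-adequate semigroup with an admissible, left ample, adequate transversal isomorphic to $S^0$. If in addition 3. $x^+\ast e=x^+e$ for all $e\in I$, $x\in S^0$, then $I(W)\cong I$. Moreover every left adequate, quasi-adequate semigroup with a left ample, admissible adequate transversal can be constructed (up to isomorphism) in this way.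
   Context: For a semigroup $S$, $S^1$ is $S$ with an identity adjoined, $E(S)$ its idempotents, $\mathcal{L},\mathcal{R}$ Green's relations. $\mathcal{R}^\ast=\{(a,b):\forall x,y\in S^1,\ xa=ya\iff xb=yb\}$, $\mathcal{L}^\ast=\{(a,b):\forall x,y\in S^1,\ ax=ay\iff bx=by\}$. $S$ is abundant if each $\mathcal{R}^\ast$- and $\mathcal{L}^\ast$-class contains an idempotent; adequate if also idempotents commute (then $a^+$, $a^\ast$ are the unique idempotents $\mathcal{R}^\ast$-, resp. $\mathcal{L}^\ast$-related to $a$); left adequate if abundant and each $\mathcal{R}^\ast$-class contains a unique idempotent. An adequate semigroup $T$ is left ample if $ae=(ae)^+a$ for all $a\in T$, $e\in E(T)$. An abundant subsemigroup $U$ of abundant $S$ is a $\ast$-subsemigroup if $\mathcal{L}^\ast(U)=\mathcal{L}^\ast(S)\cap(U\times U)$, $\mathcal{R}^\ast(U)=\mathcal{R}^\ast(S)\cap(U\times U)$. An adequate $\ast$-subsemigroup $S^0$ of abundant $S$ is an adequate transversal if each $x\in S$ has a unique $\overline{x}\in S^0$ and idempotents $e,f$ (then unique, written $e_x,f_x$) with $x=e\overline{x}f$, $e\,\mathcal{L}\,\overline{x}^+$, $f\,\mathcal{R}\,\overline{x}^\ast$; $I(S)=\{e_x:x\in S\}$. Quasi-adequate: abundant with $E(S)$ a subsemigroup; the transversal is admissible if $\overline{xy}=\overline{x}\,\overline{y}$ for all $x,y$. A left regular band satisfies $xyx=xy$; $E^0$ is a semilattice transversal of $I$ if it is a subsemilattice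 of $I$ and each element of $I$ has exactly one inverse in $E^0$. For $x\in E^0$, $L_x$ is the $\mathcal{L}$-class of $x$ in $I$. *)

theory Defs
  imports Main
begin

definition semigroup :: "'a set \<Rightarrow> ('a \<Rightarrow> 'a \<Rightarrow> 'a) \<Rightarrow> bool" where
  "semigroup S m \<longleftrightarrow> (\<forall>x\<in>S. \<forall>y\<in>S. m x y \<in> S)
     \<and> (\<forall>x\<in>S. \<forall>y\<in>S. \<forall>z\<in>S. m (m x y) z = m x (m y z))"

definition idems :: "'a set \<Rightarrow> ('a \<Rightarrow> 'a \<Rightarrow> 'a) \<Rightarrow> 'a set" where
  "idems S m = {e \<in> S. m e e = e}"

text \<open>S^1: None is the adjoined identity.\<close>
definition S1 :: "'a set \<Rightarrow> 'a option set" where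
  "S1 S = insert None (Some ` S)"

fun lmult1 :: "('a \<Rightarrow> 'a \<Rightarrow> 'a) \<Rightarrow> 'a option \<Rightarrow> 'a \<Rightarrow> 'a" where
  "lmult1 m None a = a"
| "lmult1 m (Some x) a = m x a"

fun rmult1 :: "('a \<Rightarrow> 'a \<Rightarrow> 'a) \<Rightarrow> 'a \<Rightarrow> 'a option \<Rightarrow> 'a" where
  "rmult1 m a None = a"
| "rmult1 m a (Some x) = m a x"

definition Rstar :: "'a set \<Rightarrow> ('a \<Rightarrow> 'a \<Rightarrow> 'a) \<Rightarrow> 'a \<Rightarrow> 'a \<Rightarrow> bool" where
  "Rstar S m a b \<longleftrightarrow> a \<in> S \<and> b \<in> S \<and>
     (\<forall>x\<in>S1 S. \<forall>y\<in>S1 S. lmult1 m x a = lmult1 m y a \<longleftrightarrow> lmult1 m x b = lmult1 m y b)"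

definition Lstar :: "'a set \<Rightarrow> ('a \<Rightarrow> 'a \<Rightarrow> 'a) \<Rightarrow> 'a \<Rightarrow> 'a \<Rightarrow> bool" where
  "Lstar S m a b \<longleftrightarrow> a \<in> S \<and> b \<in> S \<and>
     (\<forall>x\<in>S1 S. \<forall>y\<in>S1 S. rmult1 m a x = rmult1 m a y \<longleftrightarrow> rmult1 m b x = rmult1 m b y)"

definition greenL :: "'a set \<Rightarrow> ('a \<Rightarrow> 'a \<Rightarrow> 'a) \<Rightarrow> 'a \<Rightarrow> 'a \<Rightarrow> bool" where
  "greenL S m a b \<longleftrightarrow> a \<in> S \<and> b \<in> S \<and>
     (\<lambda>x. lmult1 m x a) ` S1 S = (\<lambda>x. lmult1 m x b) ` S1 S"

definition greenR :: "'a set \<Rightarrow> ('a \<Rightarrow> 'a \<Rightarrow> 'a) \<Rightarrow> 'a \<Rightarrow> 'a \<Rightarrow> bool" where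
  "greenR S m a b \<longleftrightarrow> a \<in> S \<and> b \<in> S \<and>
     (\<lambda>x. rmult1 m a x) ` S1 S = (\<lambda>x. rmult1 m b x) ` S1 S"

definition Lclass :: "'a set \<Rightarrow> ('a \<Rightarrow> 'a \<Rightarrow> 'a) \<Rightarrow> 'a \<Rightarrow> 'a set" where
  "Lclass S m x = {a. greenL S m a x}"

definition abundant :: "'a set \<Rightarrow> ('a \<Rightarrow> 'a \<Rightarrow> 'a) \<Rightarrow> bool" where
  "abundant S m \<longleftrightarrow> semigroup S m
     \<and> (\<forall>a\<in>S. \<exists>e\<in>idems S m. Rstar S m a e)
     \<and> (\<forall>a\<in>S. \<exists>e\<in>idems S m. Lstar S m a e)"

definition adequate :: "'a set \<Rightarrow> ('a \<Rightarrow> 'a \<Rightarrow> 'a) \<Rightarrow> bool" where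
  "adequate S m \<longleftrightarrow> abundant S m \<and> (\<forall>e\<in>idems S m. \<forall>f\<in>idems S m. m e f = m f e)"

definition left_adequate :: "'a set \<Rightarrow> ('a \<Rightarrow> 'a \<Rightarrow> 'a) \<Rightarrow> bool" where
  "left_adequate S m \<longleftrightarrow> abundant S m \<and> (\<forall>a\<in>S. \<exists>!e. e \<in> idems S m \<and> Rstar S m a e)"

definition aplus :: "'a set \<Rightarrow> ('a \<Rightarrow> 'a \<Rightarrow> 'a) \<Rightarrow> 'a \<Rightarrow> 'a" where
  "aplus S m a = (THE e. e \<in> idems S m \<and> Rstar S m a e)"

definition astar :: "'a set \<Rightarrow> ('a \<Rightarrow> 'a \<Rightarrow> 'a) \<Rightarrow> 'a \<Rightarrow> 'a" where
  "astar S m a = (THE e. e \<in> idems S m \<and> Lstar S m a e)"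

definition left_ample :: "'a set \<Rightarrow> ('a \<Rightarrow> 'a \<Rightarrow> 'a) \<Rightarrow> bool" where
  "left_ample S m \<longleftrightarrow> adequate S m \<and>
     (\<forall>a\<in>S. \<forall>e\<in>idems S m. m a e = m (aplus S m (m a e)) a)"

definition star_subsemigroup :: "'a set \<Rightarrow> 'a set \<Rightarrow> ('a \<Rightarrow> 'a \<Rightarrow> 'a) \<Rightarrow> bool" where
  "star_subsemigroup U S m \<longleftrightarrow> U \<subseteq> S \<and> abundant S m \<and> abundant U m
     \<and> (\<forall>a\<in>U. \<forall>b\<in>U. Lstar U m a b \<longleftrightarrow> Lstar S m a b)
     \<and> (\<forall>a\<in>U. \<forall>b\<in>U. Rstar U m a b \<longleftrightarrow> Rstar S m a b)"

definition decomp :: "'a set \<Rightarrow> ('a \<Rightarrow> 'a \<Rightarrow> 'a) \<Rightarrow> 'a set \<Rightarrow> 'a \<Rightarrow> 'a \<Rightarrow> 'a \<Rightarrow> 'a \<Rightarrow> bool" where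
  "decomp S m T x e t f \<longleftrightarrow> t \<in> T \<and> e \<in> idems S m \<and> f \<in> idems S m \<and> x = m (m e t) f
     \<and> greenL S m e (aplus T m t) \<and> greenR S m f (astar T m t)"

definition adequate_transversal :: "'a set \<Rightarrow> ('a \<Rightarrow> 'a \<Rightarrow> 'a) \<Rightarrow> 'a set \<Rightarrow> bool" where
  "adequate_transversal S m T \<longleftrightarrow> abundant S m \<and> adequate T m \<and> star_subsemigroup T S m
     \<and> (\<forall>x\<in>S. \<exists>!t. t \<in> T \<and> (\<exists>e f. decomp S m T x e t f))"

definition bar :: "'a set \<Rightarrow> ('a \<Rightarrow> 'a \<Rightarrow> 'a) \<Rightarrow> 'a set \<Rightarrow> 'a \<Rightarrow> 'a" where
  "bar S m T x = (THE t. t \<in> T \<and> (\<exists>e f. decomp S m T x e t f))"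

definition Iset :: "'a set \<Rightarrow> ('a \<Rightarrow> 'a \<Rightarrow> 'a) \<Rightarrow> 'a set \<Rightarrow> 'a set" where
  "Iset S m T = {e. \<exists>x\<in>S. \<exists>t f. decomp S m T x e t f}"

definition quasi_adequate :: "'a set \<Rightarrow> ('a \<Rightarrow> 'a \<Rightarrow> 'a) \<Rightarrow> bool" where
  "quasi_adequate S m \<longleftrightarrow> abundant S m \<and> (\<forall>e\<in>idems S m. \<forall>f\<in>idems S m. m e f \<in> idems S m)"

definition admissible :: "'a set \<Rightarrow> ('a \<Rightarrow> 'a \<Rightarrow> 'a) \<Rightarrow> 'a set \<Rightarrow> bool" where
  "admissible S m T \<longleftrightarrow> (\<forall>x\<in>S. \<forall>y\<in>S. bar S m T (m x y) = m (bar S m T x) (bar S m T y))"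

definition left_regular_band :: "'a set \<Rightarrow> ('a \<Rightarrow> 'a \<Rightarrow> 'a) \<Rightarrow> bool" where
  "left_regular_band S m \<longleftrightarrow> semigroup S m \<and> (\<forall>x\<in>S. m x x = x)
     \<and> (\<forall>x\<in>S. \<forall>y\<in>S. m (m x y) x = m x y)"

definition semilattice_transversal :: "'a set \<Rightarrow> ('a \<Rightarrow> 'a \<Rightarrow> 'a) \<Rightarrow> 'a set \<Rightarrow> bool" where
  "semilattice_transversal I m E0 \<longleftrightarrow> E0 \<subseteq> I
     \<and> (\<forall>e\<in>E0. \<forall>f\<in>E0. m e f \<in> E0 \<and> m e f = m f e \<and> m e e = e)
     \<and> (\<forall>a\<in>I. \<exists>!x. x \<in> E0 \<and> m (m a x) a = a \<and> m (m x a) x = x)"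

definition sg_iso :: "'a set \<Rightarrow> ('a \<Rightarrow> 'a \<Rightarrow> 'a) \<Rightarrow> 'b set \<Rightarrow> ('b \<Rightarrow> 'b \<Rightarrow> 'b) \<Rightarrow> bool" where
  "sg_iso A mA B mB \<longleftrightarrow> (\<exists>h. bij_betw h A B \<and> (\<forall>x\<in>A. \<forall>y\<in>A. h (mA x y) = mB (h x) (h y)))"

definition construction_hyps ::
  "'a set \<Rightarrow> ('a \<Rightarrow> 'a \<Rightarrow> 'a) \<Rightarrow> 'a set \<Rightarrow> ('a \<Rightarrow> 'a \<Rightarrow> 'a) \<Rightarrow> ('a \<Rightarrow> 'a \<Rightarrow> 'a) \<Rightarrow> bool" where
  "construction_hyps S0 mS I mI act \<longleftrightarrow>
     left_ample S0 mS
   \<and> left_regular_band I mI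
   \<and> semilattice_transversal I mI (idems S0 mS)
   \<and> (\<forall>e\<in>idems S0 mS. \<forall>f\<in>idems S0 mS. mI e f = mS e f)
   \<and> I = (\<Union>x\<in>idems S0 mS. Lclass I mI x)
   \<and> (\<forall>x\<in>S0. \<forall>e\<in>I. act x e \<in> I)
   \<and> (\<forall>x\<in>S0. \<forall>y\<in>S0. \<forall>e\<in>I. act (mS x y) e = act x (act y e))
   \<and> (\<forall>x\<in>S0. \<forall>e\<in>I. \<forall>f\<in>I. act x (mI e f) = mI (act x e) (act x f))
   \<and> (\<forall>x\<in>S0. \<forall>y\<in>S0. act x (aplus S0 mS y) = aplus S0 mS (mS x y))
   \<and> (\<forall>x\<in>S0. \<forall>x1\<in>S0. \<forall>x2\<in>S0.
        \<forall>e1\<in>Lclass I mI (aplus S0 mS x1). \<forall>e2\<in>Lclass I mI (aplus S0 mS x2).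
          mI (aplus S0 mS x) (act x e1) = mI (aplus S0 mS x) (act x e2) \<and> mS x x1 = mS x x2
          \<longrightarrow> act (astar S0 mS x) e1 = act (astar S0 mS x) e2
              \<and> mS (astar S0 mS x) x1 = mS (astar S0 mS x) x2)"

definition Wset :: "'a set \<Rightarrow> ('a \<Rightarrow> 'a \<Rightarrow> 'a) \<Rightarrow> 'a set \<Rightarrow> ('a \<Rightarrow> 'a \<Rightarrow> 'a) \<Rightarrow> ('a \<times> 'a) set" where
  "Wset S0 mS I mI = {(e, x). e \<in> I \<and> x \<in> S0 \<and> e \<in> Lclass I mI (aplus S0 mS x)}"

definition Wmult :: "('a \<Rightarrow> 'a \<Rightarrow> 'a) \<Rightarrow> ('a \<Rightarrow> 'a \<Rightarrow> 'a) \<Rightarrow> ('a \<Rightarrow> 'a \<Rightarrow> 'a)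
    \<Rightarrow> 'a \<times> 'a \<Rightarrow> 'a \<times> 'a \<Rightarrow> 'a \<times> 'a" where
  "Wmult mS mI act p q = (mI (fst p) (act (snd p) (fst q)), mS (snd p) (snd q))"

end

theory Submission
  imports Defs
begin


definition rv :: "('a \<Rightarrow> 'a \<Rightarrow> 'a) \<Rightarrow> 'a \<Rightarrow> 'a \<Rightarrow> 'a" where
  "rv m = (\<lambda>x y. m y x)"

lemma rv_rv[simp]: "rv (rv m) = m" by (simp add: rv_def)
lemma rv_app[simp]: "rv m x y = m y x" by (simp add: rv_def)

lemma sg_closed: "semigroup S m \<Longrightarrow> x\<in>S \<Longrightarrow> y\<in>S \<Longrightarrow> m x y \<in> S"
  by (simp add: semigroup_def)
lemma sg_assoc: "semigroup S m \<Longrightarrow> x\<in>S \<Longrightarrow> y\<in>S \<Longrightarrow> z\<in>S \<Longrightarrow> m (m x y) z = m x (m y z)"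
  by (simp add: semigroup_def)

lemma semigroup_rv: "semigroup S m \<Longrightarrow> semigroup S (rv m)"
  by (simp add: semigroup_def)

lemma idems_rv[simp]: "idems S (rv m) = idems S m" by (simp add: idems_def)

lemma rmult1_rv: "rmult1 m a x = lmult1 (rv m) x a" by (cases x) auto
lemma lmult1_rv: "lmult1 m x a = rmult1 (rv m) a x" by (cases x) auto

lemma Lstar_rv: "Lstar S m = Rstar S (rv m)"
  by (auto simp: fun_eq_iff Lstar_def Rstar_def rmult1_rv)
lemma Rstar_rv: "Rstar S m = Lstar S (rv m)"
  by (auto simp: fun_eq_iff Lstar_def Rstar_def lmult1_rv)
lemma greenR_rv: "greenR S m = greenL S (rv m)"
  by (auto simp: fun_eq_iff greenR_def greenL_def rmult1_rv)

lemma idemsD: "e \<in> idems S m \<Longrightarrow> e \<in> S \<and> m e e = e" by (simp add: idems_def)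
lemma idemsI: "e \<in> S \<Longrightarrow> m e e = e \<Longrightarrow> e \<in> idems S m" by (simp add: idems_def)

lemma S1_None[simp]: "None \<in> S1 S" by (simp add: S1_def)
lemma S1_Some[simp]: "Some x \<in> S1 S \<longleftrightarrow> x \<in> S" by (auto simp: S1_def)

lemma lmult1_in: "semigroup S m \<Longrightarrow> x \<in> S1 S \<Longrightarrow> a \<in> S \<Longrightarrow> lmult1 m x a \<in> S"
  by (cases x) (auto simp: sg_closed)

lemma lmult1_assoc: "semigroup S m \<Longrightarrow> x \<in> S1 S \<Longrightarrow> c\<in>S \<Longrightarrow> a\<in>S \<Longrightarrow>
   lmult1 m x (m c a) = m (lmult1 m x c) a"
  by (cases x) (auto simp: sg_assoc)

lemma Rstar_refl: "a \<in> S \<Longrightarrow> Rstar S m a a" by (simp add: Rstar_def)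
lemma Rstar_sym: "Rstar S m a b \<Longrightarrow> Rstar S m b a" by (auto simp: Rstar_def)
lemma Rstar_trans: "Rstar S m a b \<Longrightarrow> Rstar S m b c \<Longrightarrow> Rstar S m a c" by (auto simp: Rstar_def)
lemma Rstar_in: "Rstar S m a b \<Longrightarrow> a \<in> S \<and> b \<in> S" by (auto simp: Rstar_def)

lemma Rstar_Some: "Rstar S m a b \<Longrightarrow> x\<in>S \<Longrightarrow> y\<in>S \<Longrightarrow> m x a = m y a \<longleftrightarrow> m x b = m y b"
  unfolding Rstar_def by (metis S1_Some lmult1.simps(2))
lemma Rstar_None: "Rstar S m a b \<Longrightarrow> x\<in>S \<Longrightarrow> m x a = a \<longleftrightarrow> m x b = b"
  unfolding Rstar_def by (metis S1_Some S1_None lmult1.simps)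

lemma Rstar_I:
  assumes "a\<in>S" "b\<in>S" "e\<in>S" "m e a = a" "m e b = b"
    and "\<And>x y. x\<in>S \<Longrightarrow> y\<in>S \<Longrightarrow> m x a = m y a \<longleftrightarrow> m x b = m y b"
  shows "Rstar S m a b"
proof -
  define \<sigma> where "\<sigma> x = (case x of None \<Rightarrow> e | Some u \<Rightarrow> u)" for x
  have k: "lmult1 m x a = m (\<sigma> x) a" "lmult1 m x b = m (\<sigma> x) b" "x \<in> S1 S \<Longrightarrow> \<sigma> x \<in> S" for x
    using assms by (cases x; auto simp: \<sigma>_def)+
  show ?thesis unfolding Rstar_def using assms(1,2) k assms(6) by metis
qed

lemma Rstar_lcong:
  assumes sg: "semigroup S m" and r: "Rstar S m a b" and c: "c \<in> S"
  shows "Rstar S m (m c a) (m c b)"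
proof -
  have ab: "a\<in>S" "b\<in>S" using r by (auto simp: Rstar_def)
  have "lmult1 m x (m c a) = lmult1 m y (m c a) \<longleftrightarrow> lmult1 m x (m c b) = lmult1 m y (m c b)"
    if "x\<in>S1 S" "y\<in>S1 S" for x y
  proof -
    have "Some (lmult1 m x c) \<in> S1 S" "Some (lmult1 m y c) \<in> S1 S" using that sg c lmult1_in by auto
    then show ?thesis using r that lmult1_assoc[OF sg _ c] ab unfolding Rstar_def
      by (metis lmult1.simps(2))
  qed
  then show ?thesis using ab c sg by (simp add: Rstar_def sg_closed)
qed

lemma Rstar_idem_iff:
  assumes sg: "semigroup S m" and e: "e \<in> idems S m" and f: "f \<in> idems S m"
  shows "Rstar S m e f \<longleftrightarrow> m e f = f \<and> m f e = e"
proof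
  assume r: "Rstar S m e f"
  show "m e f = f \<and> m f e = e"
    using Rstar_None[OF r] Rstar_None[OF Rstar_sym[OF r]] e f by (auto simp: idems_def)
next
  assume h: "m e f = f \<and> m f e = e"
  have eS: "e\<in>S" "f\<in>S" "m e e = e" "m f f = f" using e f by (auto simp: idems_def)
  show "Rstar S m e f"
  proof (rule Rstar_I[where e=e])
    fix x y assume xy: "x\<in>S" "y\<in>S"
    show "m x e = m y e \<longleftrightarrow> m x f = m y f"
      by (metis h sg_assoc[OF sg] xy eS(1,2))
  qed (use eS h in auto)
qed

lemma greenL_refl: "a \<in> S \<Longrightarrow> greenL S m a a" by (simp add: greenL_def)
lemma greenR_refl: "a \<in> S \<Longrightarrow> greenR S m a a" by (simp add: greenR_def)

lemma greenL_idem_iff: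
  assumes sg: "semigroup S m" and e: "e \<in> idems S m" and f: "f \<in> idems S m"
  shows "greenL S m e f \<longleftrightarrow> m e f = e \<and> m f e = f"
proof -
  have eS: "e\<in>S" "f\<in>S" "m e e = e" "m f f = f" using e f by (auto simp: idems_def)
  have one: "m a b = a" if "a \<in> idems S m" "b \<in> idems S m" and
     img: "(\<lambda>x. lmult1 m x a) ` S1 S = (\<lambda>x. lmult1 m x b) ` S1 S" for a b
  proof -
    have "a \<in> (\<lambda>x. lmult1 m x a) ` S1 S" by (rule image_eqI[where x=None]) auto
    then obtain x where x: "x \<in> S1 S" "a = lmult1 m x b" using img by auto
    show ?thesis using x that(1,2) sg by (cases x) (auto simp: idems_def sg_assoc)
  qed
  have two: "(\<lambda>x. lmult1 m x a) ` S1 S \<subseteq> (\<lambda>x. lmult1 m x b) ` S1 S"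
    if "a\<in>S" "b\<in>S" "m a b = a" for a b
  proof
    fix z assume "z \<in> (\<lambda>x. lmult1 m x a) ` S1 S"
    then obtain x where x: "x \<in> S1 S" "z = lmult1 m x a" by auto
    have "z = lmult1 m (Some (lmult1 m x a)) b"
      using x that lmult1_assoc[OF sg x(1) that(1) that(2)] by simp
    moreover have "Some (lmult1 m x a) \<in> S1 S" using lmult1_in[OF sg x(1) that(1)] by simp
    ultimately show "z \<in> (\<lambda>x. lmult1 m x b) ` S1 S" by blast
  qed
  show ?thesis
    using one[OF e f] one[OF f e] two[of e f] two[of f e] eS unfolding greenL_def by auto
qed

lemma greenR_idem_iff:
  assumes sg: "semigroup S m" and e: "e \<in> idems S m" and f: "f \<in> idems S m"
  shows "greenR S m e f \<longleftrightarrow> m f e = e \<and> m e f = f"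
  using greenL_idem_iff[OF semigroup_rv[OF sg]] e f by (simp add: greenR_rv)

lemma Lstar_idem_iff:
  assumes sg: "semigroup S m" and e: "e \<in> idems S m" and f: "f \<in> idems S m"
  shows "Lstar S m e f \<longleftrightarrow> m f e = f \<and> m e f = e"
  using Rstar_idem_iff[OF semigroup_rv[OF sg]] e f by (simp add: Lstar_rv)


definition runiq :: "'a set \<Rightarrow> ('a \<Rightarrow> 'a \<Rightarrow> 'a) \<Rightarrow> bool" where
  "runiq S m \<longleftrightarrow> (\<forall>a\<in>S. \<exists>!e. e \<in> idems S m \<and> Rstar S m a e)"

lemma abundant_sg: "abundant S m \<Longrightarrow> semigroup S m" by (simp add: abundant_def)
lemma adequate_sg: "adequate S m \<Longrightarrow> semigroup S m" by (simp add: adequate_def abundant_def)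

lemma abundant_rv: assumes "abundant S m" shows "abundant S (rv m)"
proof -
  have "Lstar S (rv m) = Rstar S m" using Lstar_rv[of S "rv m"] by simp
  moreover have "Rstar S (rv m) = Lstar S m" using Lstar_rv[of S m] by simp
  ultimately show ?thesis using assms semigroup_rv unfolding abundant_def by (metis idems_rv)
qed

lemma adequate_rv: "adequate S m \<Longrightarrow> adequate S (rv m)"
  by (simp add: adequate_def abundant_rv)

lemma adequate_runiq:
  assumes ad: "adequate S m" shows "runiq S m"
  unfolding runiq_def
proof
  fix a assume a: "a \<in> S"
  obtain e where e: "e\<in>idems S m" "Rstar S m a e" using ad a by (auto simp: adequate_def abundant_def)
  have sg: "semigroup S m" using ad adequate_sg by blast
  have "f = e" if "f\<in>idems S m" "Rstar S m a f" for f
  proof -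
    have "Rstar S m e f" using that e Rstar_sym Rstar_trans by metis
    then have "m e f = f" "m f e = e" using Rstar_idem_iff[OF sg e(1) that(1)] by auto
    moreover have "m e f = m f e" using ad e(1) that(1) by (simp add: adequate_def)
    ultimately show ?thesis by simp
  qed
  then show "\<exists>!e. e \<in> idems S m \<and> Rstar S m a e" using e by blast
qed

lemma left_adequate_runiq: "left_adequate S m \<Longrightarrow> runiq S m"
  by (simp add: left_adequate_def runiq_def)

lemma runiq_plus:
  assumes "runiq S m" "a \<in> S"
  shows "aplus S m a \<in> idems S m" "Rstar S m a (aplus S m a)"
proof -
  have "\<exists>!e. e \<in> idems S m \<and> Rstar S m a e" using assms unfolding runiq_def by blast
  from theI'[OF this] show "aplus S m a \<in> idems S m" "Rstar S m a (aplus S m a)"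
    unfolding aplus_def by blast+
qed

lemma runiq_plus_eq:
  assumes "runiq S m" "a \<in> S" "e \<in> idems S m" "Rstar S m a e"
  shows "aplus S m a = e"
proof -
  have "\<exists>!e. e \<in> idems S m \<and> Rstar S m a e" using assms unfolding runiq_def by blast
  from the1_equality[OF this] show ?thesis using assms(3,4) unfolding aplus_def by blast
qed

lemma runiq_plus_mult:
  assumes "runiq S m" "a \<in> S" shows "m (aplus S m a) a = a"
proof -
  have i: "aplus S m a \<in> idems S m" and r: "Rstar S m a (aplus S m a)" using runiq_plus[OF assms] by auto
  have p: "aplus S m a \<in> S" "m (aplus S m a) (aplus S m a) = aplus S m a" using idemsD[OF i] by auto
  show ?thesis using Rstar_None[OF Rstar_sym[OF r] p(1)] p(2) by blast
qed

lemma runiq_plus_idem: assumes "runiq S m" "e \<in> idems S m" shows "aplus S m e = e"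
proof -
  have "e \<in> S" using idemsD[OF assms(2)] by blast
  then show ?thesis using runiq_plus_eq[OF assms(1) _ assms(2) Rstar_refl] by blast
qed

lemma runiq_plus_cong: "runiq S m \<Longrightarrow> Rstar S m a b \<Longrightarrow> aplus S m a = aplus S m b"
proof -
  assume u: "runiq S m" and r: "Rstar S m a b"
  have ab: "a \<in> S" "b \<in> S" using Rstar_in[OF r] by auto
  have "Rstar S m a (aplus S m b)" using Rstar_trans[OF r runiq_plus(2)[OF u ab(2)]] .
  then show ?thesis using runiq_plus_eq[OF u ab(1) runiq_plus(1)[OF u ab(2)]] by blast
qed

lemma runiq_plus_le:
  assumes u: "runiq S m" and sg: "semigroup S m" and a: "a\<in>S" and b: "b\<in>S"
  shows "m (aplus S m a) (aplus S m (m a b)) = aplus S m (m a b)"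
proof -
  have ab: "m a b \<in> S" using sg_closed[OF sg a b] .
  have p: "aplus S m a \<in> S" using idemsD[OF runiq_plus(1)[OF u a]] by blast
  have "m (aplus S m a) (m a b) = m (m (aplus S m a) a) b"
    using sg_assoc[OF sg p a b] by simp
  also have "\<dots> = m a b" using runiq_plus_mult[OF u a] by simp
  finally have "m (aplus S m a) (m a b) = m a b" .
  then show ?thesis using Rstar_None[OF runiq_plus(2)[OF u ab] p] by blast
qed

lemma astar_rv: "astar S m = aplus S (rv m)"
  unfolding astar_def aplus_def Lstar_rv idems_rv ..

lemma adequate_comm: "adequate S m \<Longrightarrow> e \<in> idems S m \<Longrightarrow> f \<in> idems S m \<Longrightarrow> m e f = m f e"
  by (simp add: adequate_def)

lemma adequate_idem_closed:
  assumes ad: "adequate S m" and e: "e \<in> idems S m" and f: "f \<in> idems S m"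
  shows "m e f \<in> idems S m"
proof -
  have sg: "semigroup S m" using ad adequate_sg by blast
  have eS: "e\<in>S" "f\<in>S" "m e e = e" "m f f = f" using e f by (auto simp: idems_def)
  have "m (m e f) (m e f) = m e (m (m f e) f)" using sg_assoc[OF sg] eS sg_closed[OF sg] by simp
  also have "\<dots> = m e (m (m e f) f)" using adequate_comm[OF ad e f] by simp
  also have "\<dots> = m e (m e f)" using sg_assoc[OF sg] eS sg_closed[OF sg] by simp
  also have "\<dots> = m e f" using sg_assoc[OF sg, of e e f, symmetric] eS by simp
  finally show ?thesis using eS sg_closed[OF sg] by (auto simp: idems_def)
qed


definition iso_hyp :: "'a set \<Rightarrow> ('a \<Rightarrow> 'a \<Rightarrow> 'a) \<Rightarrow> 'b set \<Rightarrow> ('b \<Rightarrow> 'b \<Rightarrow> 'b) \<Rightarrow> ('a \<Rightarrow> 'b) \<Rightarrow> bool" where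
  "iso_hyp A m B m' h \<longleftrightarrow> semigroup A m \<and> semigroup B m' \<and> bij_betw h A B
     \<and> (\<forall>x\<in>A. \<forall>y\<in>A. h (m x y) = m' (h x) (h y))"

lemma iso_rv: "iso_hyp A m B m' h \<Longrightarrow> iso_hyp A (rv m) B (rv m') h"
  by (simp add: iso_hyp_def semigroup_rv)

lemma iso_sg_iso: "iso_hyp A m B m' h \<Longrightarrow> sg_iso A m B m'"
  unfolding iso_hyp_def sg_iso_def by blast

context fixes A m B m' h assumes iso: "iso_hyp A m B m' h"
begin

lemma iso_sgA: "semigroup A m" using iso by (simp add: iso_hyp_def)
lemma iso_sgB: "semigroup B m'" using iso by (simp add: iso_hyp_def)
lemma iso_in: "x \<in> A \<Longrightarrow> h x \<in> B" using iso by (auto simp: iso_hyp_def bij_betw_def)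
lemma iso_inj: "x \<in> A \<Longrightarrow> y \<in> A \<Longrightarrow> h x = h y \<Longrightarrow> x = y"
  using iso by (auto simp: iso_hyp_def bij_betw_def inj_on_def)
lemma iso_surj: "b \<in> B \<Longrightarrow> \<exists>a\<in>A. b = h a"
  using iso by (auto simp: iso_hyp_def bij_betw_def)
lemma iso_hom: "x \<in> A \<Longrightarrow> y \<in> A \<Longrightarrow> h (m x y) = m' (h x) (h y)"
  using iso by (simp add: iso_hyp_def)

lemma iso_idems: assumes a: "a \<in> A" shows "a \<in> idems A m \<longleftrightarrow> h a \<in> idems B m'"
proof -
  have aa: "m a a \<in> A" using sg_closed[OF iso_sgA a a] .
  have "m a a = a \<longleftrightarrow> h (m a a) = h a" using iso_inj[OF aa a] by auto
  then show ?thesis unfolding idems_def using a iso_in[OF a] iso_hom[OF a a] by simp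
qed

lemma iso_S1: "map_option h ` S1 A = S1 B"
  unfolding S1_def using iso by (auto simp: iso_hyp_def bij_betw_def image_image)

lemma iso_lmult1: "x \<in> S1 A \<Longrightarrow> a \<in> A \<Longrightarrow> h (lmult1 m x a) = lmult1 m' (map_option h x) (h a)"
  by (cases x) (auto simp: iso_hom)

lemma iso_Rstar: assumes a: "a \<in> A" and b: "b \<in> A"
  shows "Rstar A m a b \<longleftrightarrow> Rstar B m' (h a) (h b)"
proof -
  have eq: "lmult1 m x c = lmult1 m y c \<longleftrightarrow> lmult1 m' (map_option h x) (h c) = lmult1 m' (map_option h y) (h c)"
    if "x \<in> S1 A" "y \<in> S1 A" "c \<in> A" for x y c
    using iso_lmult1[OF that(1,3)] iso_lmult1[OF that(2,3)]
      iso_inj[OF lmult1_in[OF iso_sgA that(1,3)] lmult1_in[OF iso_sgA that(2,3)]] by metis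
  have "(\<forall>x\<in>S1 A. \<forall>y\<in>S1 A. lmult1 m x a = lmult1 m y a \<longleftrightarrow> lmult1 m x b = lmult1 m y b)
     \<longleftrightarrow> (\<forall>x\<in>S1 A. \<forall>y\<in>S1 A. lmult1 m' (map_option h x) (h a) = lmult1 m' (map_option h y) (h a)
          \<longleftrightarrow> lmult1 m' (map_option h x) (h b) = lmult1 m' (map_option h y) (h b))"
    using eq a b by simp
  also have "\<dots> \<longleftrightarrow> (\<forall>x\<in>S1 B. \<forall>y\<in>S1 B. lmult1 m' x (h a) = lmult1 m' y (h a)
          \<longleftrightarrow> lmult1 m' x (h b) = lmult1 m' y (h b))"
    unfolding iso_S1[symmetric] by simp
  finally show ?thesis unfolding Rstar_def using a b iso_in by simp
qed

end

lemma iso_Lstar: assumes "iso_hyp A m B m' h" "a \<in> A" "b \<in> A"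
  shows "Lstar A m a b \<longleftrightarrow> Lstar B m' (h a) (h b)"
  using iso_Rstar[OF iso_rv[OF assms(1)] assms(2,3)] by (simp add: Lstar_rv)

lemma iso_abundant_R:
  assumes iso: "iso_hyp A m B m' h" and ab: "\<forall>a\<in>B. \<exists>e\<in>idems B m'. Rstar B m' a e"
  shows "\<forall>a\<in>A. \<exists>e\<in>idems A m. Rstar A m a e"
proof
  fix a assume a: "a \<in> A"
  obtain e' where e': "e' \<in> idems B m'" "Rstar B m' (h a) e'" using ab iso_in[OF iso a] by blast
  have "e' \<in> B" using idemsD[OF e'(1)] by blast
  then obtain e where e: "e \<in> A" "e' = h e" using iso_surj[OF iso] by blast
  show "\<exists>e\<in>idems A m. Rstar A m a e"
    using e e' iso_idems[OF iso e(1)] iso_Rstar[OF iso a e(1)] by blast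
qed

lemma iso_abundant:
  assumes iso: "iso_hyp A m B m' h" and ab: "abundant B m'" shows "abundant A m"
proof -
  have "\<forall>a\<in>A. \<exists>e\<in>idems A m. Rstar A m a e" using iso_abundant_R[OF iso] ab by (simp add: abundant_def)
  moreover have "\<forall>a\<in>A. \<exists>e\<in>idems A (rv m). Rstar A (rv m) a e"
    using iso_abundant_R[OF iso_rv[OF iso]] abundant_rv[OF ab] by (simp add: abundant_def)
  ultimately show ?thesis using iso_sgA[OF iso] by (simp add: abundant_def Lstar_rv)
qed

lemma iso_adequate:
  assumes iso: "iso_hyp A m B m' h" and ad: "adequate B m'" shows "adequate A m"
proof -
  have "m e f = m f e" if "e \<in> idems A m" "f \<in> idems A m" for e f
  proof -
    have ef: "e\<in>A" "f\<in>A" using idemsD[OF that(1)] idemsD[OF that(2)] by auto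
    have hi: "h e \<in> idems B m'" "h f \<in> idems B m'" using iso_idems[OF iso] ef that by auto
    have "h (m e f) = h (m f e)"
      using iso_hom[OF iso ef] iso_hom[OF iso ef(2,1)] adequate_comm[OF ad hi] by simp
    then show ?thesis using iso_inj[OF iso sg_closed[OF iso_sgA[OF iso] ef] sg_closed[OF iso_sgA[OF iso] ef(2,1)]] by blast
  qed
  then show ?thesis using iso_abundant[OF iso] ad by (simp add: adequate_def)
qed

lemma iso_aplus:
  assumes iso: "iso_hyp A m B m' h" and ad: "adequate B m'" and a: "a \<in> A"
  shows "h (aplus A m a) = aplus B m' (h a)"
proof -
  have uA: "runiq A m" using adequate_runiq[OF iso_adequate[OF iso ad]] .
  have p: "aplus A m a \<in> idems A m" "Rstar A m a (aplus A m a)" using runiq_plus[OF uA a] by auto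
  have pA: "aplus A m a \<in> A" using idemsD[OF p(1)] by blast
  show ?thesis
    using runiq_plus_eq[OF adequate_runiq[OF ad] iso_in[OF iso a]] p iso_idems[OF iso pA]
      iso_Rstar[OF iso a pA] by simp
qed

lemma iso_left_ample:
  assumes iso: "iso_hyp A m B m' h" and la: "left_ample B m'" shows "left_ample A m"
proof -
  have ad: "adequate B m'" using la by (simp add: left_ample_def)
  have sg: "semigroup A m" using iso_sgA[OF iso] .
  have "m a e = m (aplus A m (m a e)) a" if a: "a\<in>A" and e: "e \<in> idems A m" for a e
  proof -
    have eA: "e \<in> A" using idemsD[OF e] by blast
    have ae: "m a e \<in> A" using sg_closed[OF sg a eA] .
    have pA: "aplus A m (m a e) \<in> A"
      using idemsD[OF runiq_plus(1)[OF adequate_runiq[OF iso_adequate[OF iso ad]] ae]] by blast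
    have "h (m a e) = m' (h a) (h e)" using iso_hom[OF iso a eA] .
    also have "\<dots> = m' (aplus B m' (m' (h a) (h e))) (h a)"
      using la iso_in[OF iso a] iso_idems[OF iso eA] e by (simp add: left_ample_def)
    also have "\<dots> = h (m (aplus A m (m a e)) a)"
      using iso_hom[OF iso pA a] iso_aplus[OF iso ad ae] iso_hom[OF iso a eA] by simp
    finally show ?thesis using iso_inj[OF iso ae sg_closed[OF sg pA a]] by blast
  qed
  then show ?thesis using iso_adequate[OF iso ad] by (simp add: left_ample_def)
qed


lemma star_sub_R:
  assumes sgB: "semigroup B m" and AB: "A \<subseteq> B" and sgA: "semigroup A m"
    and ab: "a \<in> A" "b \<in> A" and ef: "e \<in> idems A m" "f \<in> idems A m"
    and rA: "Rstar A m a e" "Rstar A m b f" and rB: "Rstar B m a e" "Rstar B m b f"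
  shows "Rstar A m a b \<longleftrightarrow> Rstar B m a b"
proof -
  have efB: "e \<in> idems B m" "f \<in> idems B m" using ef AB by (auto simp: idems_def)
  have "Rstar A m a b \<longleftrightarrow> Rstar A m e f"
    using Rstar_trans[OF Rstar_trans[OF Rstar_sym[OF rA(1)]] rA(2)]
      Rstar_trans[OF Rstar_trans[OF rA(1)] Rstar_sym[OF rA(2)]] by blast
  also have "\<dots> \<longleftrightarrow> m e f = f \<and> m f e = e" using Rstar_idem_iff[OF sgA ef] .
  also have "\<dots> \<longleftrightarrow> Rstar B m e f" using Rstar_idem_iff[OF sgB efB] by simp
  also have "\<dots> \<longleftrightarrow> Rstar B m a b"
    using Rstar_trans[OF Rstar_trans[OF Rstar_sym[OF rB(1)]] rB(2)]
      Rstar_trans[OF Rstar_trans[OF rB(1)] Rstar_sym[OF rB(2)]] by blast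
  finally show ?thesis .
qed



lemma Wmult_simp[simp]: "Wmult mS mI act (e,x) (g,y) = (mI e (act x g), mS x y)"
  by (simp add: Wmult_def)

locale C =
  fixes S0 :: "'a set" and mS and I and mI and act
  assumes H: "construction_hyps S0 mS I mI act"
begin

abbreviation "E0 \<equiv> idems S0 mS"
abbreviation "pl \<equiv> aplus S0 mS"
abbreviation "st \<equiv> astar S0 mS"
abbreviation "W \<equiv> Wset S0 mS I mI"
abbreviation "Wm \<equiv> Wmult mS mI act"

lemmas Hd = H[unfolded construction_hyps_def]
lemma la: "left_ample S0 mS" using Hd by (elim conjE) assumption
lemma ad: "adequate S0 mS" using la by (simp add: left_ample_def)
lemma sg0: "semigroup S0 mS" using adequate_sg[OF ad] .
lemma u0: "runiq S0 mS" using adequate_runiq[OF ad] .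
lemma u0r: "runiq S0 (rv mS)" using adequate_runiq[OF adequate_rv[OF ad]] .
lemma lrb: "left_regular_band I mI" using Hd by (elim conjE) assumption
lemma sgI: "semigroup I mI" using lrb by (simp add: left_regular_band_def)
lemma idI: "a \<in> I \<Longrightarrow> mI a a = a" using lrb by (simp add: left_regular_band_def)
lemma lrbI: "a \<in> I \<Longrightarrow> b \<in> I \<Longrightarrow> mI (mI a b) a = mI a b" using lrb by (simp add: left_regular_band_def)
lemma clI: "a \<in> I \<Longrightarrow> b \<in> I \<Longrightarrow> mI a b \<in> I" using sg_closed[OF sgI] .
lemma asI: "a \<in> I \<Longrightarrow> b \<in> I \<Longrightarrow> c \<in> I \<Longrightarrow> mI (mI a b) c = mI a (mI b c)" using sg_assoc[OF sgI] .
lemma cl0: "a \<in> S0 \<Longrightarrow> b \<in> S0 \<Longrightarrow> mS a b \<in> S0" using sg_closed[OF sg0] .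
lemma as0: "a \<in> S0 \<Longrightarrow> b \<in> S0 \<Longrightarrow> c \<in> S0 \<Longrightarrow> mS (mS a b) c = mS a (mS b c)" using sg_assoc[OF sg0] .
lemma stv: "semilattice_transversal I mI E0" using Hd by (elim conjE) assumption
lemma E0I: "e \<in> E0 \<Longrightarrow> e \<in> I" using stv unfolding semilattice_transversal_def by blast
lemma E0S: "e \<in> E0 \<Longrightarrow> e \<in> S0" by (simp add: idems_def)
lemma E0id: "e \<in> E0 \<Longrightarrow> mS e e = e" by (simp add: idems_def)
lemma mIS_all: "\<forall>e\<in>E0. \<forall>f\<in>E0. mI e f = mS e f" using Hd by (elim conjE) assumption
lemma mIS: "e \<in> E0 \<Longrightarrow> f \<in> E0 \<Longrightarrow> mI e f = mS e f" using mIS_all by blast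
lemma Iun: "I = (\<Union>x\<in>E0. Lclass I mI x)" using Hd by (elim conjE) assumption
lemma act_in_all: "\<forall>x\<in>S0. \<forall>e\<in>I. act x e \<in> I" using Hd by (elim conjE) assumption
lemma act_in: "x \<in> S0 \<Longrightarrow> e \<in> I \<Longrightarrow> act x e \<in> I" using act_in_all by blast
lemma act_comp_all: "\<forall>x\<in>S0. \<forall>y\<in>S0. \<forall>e\<in>I. act (mS x y) e = act x (act y e)" using Hd by (elim conjE) assumption
lemma act_comp: "x \<in> S0 \<Longrightarrow> y \<in> S0 \<Longrightarrow> e \<in> I \<Longrightarrow> act (mS x y) e = act x (act y e)"
  using act_comp_all by blast
lemma act_dist_all: "\<forall>x\<in>S0. \<forall>e\<in>I. \<forall>f\<in>I. act x (mI e f) = mI (act x e) (act x f)" using Hd by (elim conjE) assumption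
lemma act_dist: "x \<in> S0 \<Longrightarrow> e \<in> I \<Longrightarrow> f \<in> I \<Longrightarrow> act x (mI e f) = mI (act x e) (act x f)"
  using act_dist_all by blast
lemma cond1_all: "\<forall>x\<in>S0. \<forall>y\<in>S0. act x (pl y) = pl (mS x y)" using Hd by (elim conjE) assumption
lemma cond1: "x \<in> S0 \<Longrightarrow> y \<in> S0 \<Longrightarrow> act x (pl y) = pl (mS x y)"
  using cond1_all by blast
lemma cond2_all: "\<forall>x\<in>S0. \<forall>x1\<in>S0. \<forall>x2\<in>S0.
        \<forall>e1\<in>Lclass I mI (pl x1). \<forall>e2\<in>Lclass I mI (pl x2).
          mI (pl x) (act x e1) = mI (pl x) (act x e2) \<and> mS x x1 = mS x x2
          \<longrightarrow> act (st x) e1 = act (st x) e2 \<and> mS (st x) x1 = mS (st x) x2"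
  using Hd by (elim conjE) assumption
lemma cond2: "x \<in> S0 \<Longrightarrow> x1 \<in> S0 \<Longrightarrow> x2 \<in> S0 \<Longrightarrow> e1 \<in> Lclass I mI (pl x1) \<Longrightarrow> e2 \<in> Lclass I mI (pl x2)
   \<Longrightarrow> mI (pl x) (act x e1) = mI (pl x) (act x e2) \<Longrightarrow> mS x x1 = mS x x2
   \<Longrightarrow> act (st x) e1 = act (st x) e2 \<and> mS (st x) x1 = mS (st x) x2"
  using cond2_all by blast

lemma E0comm: "e \<in> E0 \<Longrightarrow> f \<in> E0 \<Longrightarrow> mS e f = mS f e" using adequate_comm[OF ad] .
lemma E0cl: "e \<in> E0 \<Longrightarrow> f \<in> E0 \<Longrightarrow> mS e f \<in> E0" using adequate_idem_closed[OF ad] .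

lemma plE: "x \<in> S0 \<Longrightarrow> pl x \<in> E0" using runiq_plus(1)[OF u0] .
lemma plR: "x \<in> S0 \<Longrightarrow> Rstar S0 mS x (pl x)" using runiq_plus(2)[OF u0] .
lemma plm: "x \<in> S0 \<Longrightarrow> mS (pl x) x = x" using runiq_plus_mult[OF u0] .
lemma plid: "e \<in> E0 \<Longrightarrow> pl e = e" using runiq_plus_idem[OF u0] .
lemma plle: "x \<in> S0 \<Longrightarrow> y \<in> S0 \<Longrightarrow> mS (pl x) (pl (mS x y)) = pl (mS x y)"
  using runiq_plus_le[OF u0 sg0] .
lemma stE: "x \<in> S0 \<Longrightarrow> st x \<in> E0" using runiq_plus(1)[OF u0r] by (simp add: astar_rv)
lemma stL: "x \<in> S0 \<Longrightarrow> Lstar S0 mS x (st x)" using runiq_plus(2)[OF u0r] by (simp add: astar_rv Lstar_rv)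
lemma stm: "x \<in> S0 \<Longrightarrow> mS x (st x) = x" using runiq_plus_mult[OF u0r] by (simp add: astar_rv)
lemma stid: "e \<in> E0 \<Longrightarrow> st e = e" using runiq_plus_idem[OF u0r] by (simp add: astar_rv)

lemma plI: "x \<in> S0 \<Longrightarrow> pl x \<in> I" using E0I[OF plE] .
lemma plS: "x \<in> S0 \<Longrightarrow> pl x \<in> S0" using E0S[OF plE] .
lemma stI: "x \<in> S0 \<Longrightarrow> st x \<in> I" using E0I[OF stE] .
lemma stS: "x \<in> S0 \<Longrightarrow> st x \<in> S0" using E0S[OF stE] .

lemma idemsI_all: "a \<in> I \<Longrightarrow> a \<in> idems I mI" using idI by (simp add: idems_def)

lemma LI: "a \<in> I \<Longrightarrow> b \<in> I \<Longrightarrow> greenL I mI a b \<longleftrightarrow> mI a b = a \<and> mI b a = b"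
  using greenL_idem_iff[OF sgI idemsI_all idemsI_all] .

lemma Lclass_iff: "a \<in> Lclass I mI x \<longleftrightarrow> a \<in> I \<and> x \<in> I \<and> mI a x = a \<and> mI x a = x"
proof -
  have "a \<in> Lclass I mI x \<longleftrightarrow> greenL I mI a x" by (simp add: Lclass_def)
  moreover have "greenL I mI a x \<Longrightarrow> a \<in> I \<and> x \<in> I" by (simp add: greenL_def)
  ultimately show ?thesis using LI by blast
qed

lemma W_iff: "(e,x) \<in> W \<longleftrightarrow> e \<in> I \<and> x \<in> S0 \<and> mI e (pl x) = e \<and> mI (pl x) e = pl x"
  unfolding Wset_def using Lclass_iff plI by auto

lemma A1: "x \<in> S0 \<Longrightarrow> e \<in> E0 \<Longrightarrow> act x e = pl (mS x e)"
  using cond1[of x e] plid E0S by simp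

lemma AE: "e \<in> E0 \<Longrightarrow> f \<in> E0 \<Longrightarrow> act e f = mS e f"
  using A1[of e f] E0S plid E0cl by simp

lemma A3: assumes x: "x \<in> E0" and e: "e \<in> I" "mI e x = e" "mI x e = x"
  shows "mI (act x e) x = act x e" "mI x (act x e) = x"
proof -
  have xx: "act x x = x" using AE[OF x x] E0id[OF x] by simp
  have xI: "x \<in> I" "x \<in> S0" using E0I E0S x by auto
  show "mI (act x e) x = act x e" using act_dist[OF xI(2) e(1) xI(1)] xx e(2) by simp
  show "mI x (act x e) = x" using act_dist[OF xI(2) xI(1) e(1)] xx e(3) by simp
qed

lemma Lsame: "a\<in>I \<Longrightarrow> b\<in>I \<Longrightarrow> c\<in>I \<Longrightarrow> mI a c = a \<Longrightarrow> mI c b = c \<Longrightarrow> mI a b = a"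
proof -
  assume h: "a\<in>I" "b\<in>I" "c\<in>I" "mI a c = a" "mI c b = c"
  have "mI a b = mI (mI a c) b" using h by simp
  also have "\<dots> = mI a (mI c b)" using asI h by blast
  finally show ?thesis using h by simp
qed

lemma W_closed: assumes p: "(e,x) \<in> W" and q: "(g,y) \<in> W"
  shows "(mI e (act x g), mS x y) \<in> W"
proof -
  have h: "e\<in>I" "x\<in>S0" "mI e (pl x) = e" "mI (pl x) e = pl x"
          "g\<in>I" "y\<in>S0" "mI g (pl y) = g" "mI (pl y) g = pl y" using p q W_iff by auto
  define c where "c = pl x"
  define u where "u = pl (mS x y)"
  define g' where "g' = act x g"
  have cI: "c \<in> I" "c \<in> E0" unfolding c_def using plI plE h by auto
  have uI: "u \<in> I" "u \<in> E0" unfolding u_def using plI plE h cl0 by auto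
  have g'I: "g' \<in> I" unfolding g'_def using act_in h by auto
  have uact: "u = act x (pl y)" unfolding u_def using cond1 h by simp
  have uc: "mI u c = u" using mIS[OF uI(2) cI(2)] E0comm[OF uI(2) cI(2)] plle[OF h(2) h(6)]
    unfolding u_def c_def by simp
  have g'u: "mI g' u = g'" unfolding g'_def uact using act_dist[OF h(2) h(5) plI[OF h(6)]] h(7) by simp
  have ue: "mI u e = u" using asI[OF uI(1) cI(1) h(1)] uc h(4) unfolding c_def by simp
  have ug': "mI u g' = u" unfolding g'_def uact using act_dist[OF h(2) plI[OF h(6)] h(5)] h(8) by simp
  have eg: "mI e g' \<in> I" using clI h(1) g'I by blast
  have 1: "mI (mI e g') u = mI e g'" using asI[OF h(1) g'I uI(1)] g'u by simp
  have 2: "mI u (mI e g') = u" using asI[OF uI(1) h(1) g'I, symmetric] ue ug' by simp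
  show ?thesis using W_iff eg cl0[OF h(2) h(6)] 1 2 unfolding u_def g'_def by simp
qed

lemma W_sub: "p \<in> W \<Longrightarrow> fst p \<in> I \<and> snd p \<in> S0" using W_iff by (cases p) auto

lemma sgW: "semigroup W Wm"
proof -
  have "Wm p q \<in> W" if "p \<in> W" "q \<in> W" for p q
    using W_closed that by (cases p, cases q) auto
  moreover have "Wm (Wm p q) r = Wm p (Wm q r)" if "p \<in> W" "q \<in> W" "r \<in> W" for p q r
  proof -
    obtain e x g y f z where pq: "p = (e,x)" "q = (g,y)" "r = (f,z)" by (cases p, cases q, cases r) auto
    have h: "e\<in>I" "x\<in>S0" "g\<in>I" "y\<in>S0" "f\<in>I" "z\<in>S0" using that W_sub pq by auto
    have "act x (mI g (act y f)) = mI (act x g) (act (mS x y) f)"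
      using act_dist[OF h(2) h(3) act_in[OF h(4) h(5)]] act_comp[OF h(2) h(4) h(5)] by simp
    then show ?thesis using pq h asI act_in cl0 as0 by simp
  qed
  ultimately show ?thesis by (simp add: semigroup_def)
qed


lemma Lsame_L: assumes "e \<in> Lclass I mI c" "f \<in> Lclass I mI c" shows "mI e f = e"
  using assms Lsame unfolding Lclass_iff by blast

lemma W_Lc: "(e,x) \<in> W \<Longrightarrow> e \<in> Lclass I mI (pl x)"
  using W_iff Lclass_iff plI by auto

lemma A3L: assumes "x \<in> E0" "e \<in> Lclass I mI x" shows "act x e \<in> Lclass I mI x"
  using A3[OF assms(1)] assms Lclass_iff act_in E0S by auto

lemma W_idems: assumes p: "(e,x) \<in> W" shows "(e,x) \<in> idems W Wm \<longleftrightarrow> x \<in> E0"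
proof
  assume "(e,x) \<in> idems W Wm"
  then have "mS x x = x" by (simp add: idems_def)
  then show "x \<in> E0" using p W_iff by (simp add: idems_def)
next
  assume x: "x \<in> E0"
  have eL: "e \<in> Lclass I mI x" using W_Lc[OF p] plid[OF x] by simp
  have "mI e (act x e) = e" using Lsame_L[OF eL A3L[OF x eL]] .
  then show "(e,x) \<in> idems W Wm" using p E0id[OF x] by (simp add: idems_def)
qed

lemma Wplus_in: "(e,x) \<in> W \<Longrightarrow> (e, pl x) \<in> W"
  using W_iff plS plid plE by auto

lemma Wstar_in: assumes x: "x \<in> S0" shows "(st x, st x) \<in> W"
  using W_iff stS[OF x] stI[OF x] idI[OF stI[OF x]] plid[OF stE[OF x]] by auto

lemma W_R: assumes p: "(e,x) \<in> W" shows "Rstar W Wm (e,x) (e, pl x)"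
proof -
  have h: "e \<in> I" "x \<in> S0" using p W_iff by auto
  have eL: "e \<in> Lclass I mI (pl x)" using W_Lc[OF p] .
  have ea: "mI e (act (pl x) e) = e" using Lsame_L[OF eL A3L[OF plE[OF h(2)] eL]] .
  show ?thesis
  proof (rule Rstar_I[where e="(e, pl x)"])
    show "(e,x) \<in> W" "(e, pl x) \<in> W" "(e, pl x) \<in> W" using p Wplus_in by auto
    show "Wm (e, pl x) (e, x) = (e, x)" using ea plm[OF h(2)] by simp
    show "Wm (e, pl x) (e, pl x) = (e, pl x)" using ea E0id[OF plE[OF h(2)]] by simp
    fix q r assume qr: "q \<in> W" "r \<in> W"
    obtain f u g v where fu: "q = (f,u)" "r = (g,v)" by (cases q, cases r) auto
    have uv: "u \<in> S0" "v \<in> S0" using qr fu W_iff by auto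
    have "mS u x = mS v x \<longleftrightarrow> mS u (pl x) = mS v (pl x)" using Rstar_Some[OF plR[OF h(2)] uv] .
    then show "Wm q (e, x) = Wm r (e, x) \<longleftrightarrow> Wm q (e, pl x) = Wm r (e, pl x)" using fu by auto
  qed
qed

lemma W_R_uniq: assumes p: "(e,x) \<in> W" and q: "q \<in> idems W Wm" and r: "Rstar W Wm (e,x) q"
  shows "q = (e, pl x)"
proof -
  obtain f u where fu: "q = (f,u)" by (cases q) auto
  have h: "e \<in> I" "x \<in> S0" using p W_iff by auto
  have qW: "(f,u) \<in> W" using q fu by (simp add: idems_def)
  have uE: "u \<in> E0" using W_idems[OF qW] q fu by simp
  have pW: "(e, pl x) \<in> W" using Wplus_in[OF p] .
  have pI: "(e, pl x) \<in> idems W Wm" using W_idems[OF pW] plE[OF h(2)] by simp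
  have r2: "Rstar W Wm (e, pl x) (f,u)" using Rstar_trans[OF Rstar_sym[OF W_R[OF p]] r] fu by simp
  have eq: "Wm (e, pl x) (f,u) = (f,u)" "Wm (f,u) (e, pl x) = (e, pl x)"
    using Rstar_idem_iff[OF sgW pI] q fu r2 by auto
  have u: "u = pl x" using eq E0comm[OF uE plE[OF h(2)]] by auto
  have fL: "f \<in> Lclass I mI (pl x)" using W_Lc[OF qW] plid[OF uE] u by simp
  have eL: "e \<in> Lclass I mI (pl x)" using W_Lc[OF p] .
  have "mI e (act (pl x) f) = e" using Lsame_L[OF eL A3L[OF plE[OF h(2)] fL]] .
  then have "f = e" using eq(1) by simp
  then show ?thesis using fu u by simp
qed

lemma W_L: assumes p: "(e,x) \<in> W" shows "Lstar W Wm (e,x) (st x, st x)"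
proof -
  have h: "e \<in> I" "x \<in> S0" "mI e (pl x) = e" "mI (pl x) e = pl x" using p W_iff by auto
  have sE: "st x \<in> E0" using stE[OF h(2)] .
  have axs: "act x (st x) = pl x" using A1[OF h(2) sE] stm[OF h(2)] by simp
  have "Rstar W (rv Wm) (e,x) (st x, st x)"
  proof (rule Rstar_I[where e="(st x, st x)"])
    show "(e,x) \<in> W" "(st x, st x) \<in> W" "(st x, st x) \<in> W" using p Wstar_in h by auto
    show "rv Wm (st x, st x) (e, x) = (e, x)" using axs h(3) stm[OF h(2)] by simp
    show "rv Wm (st x, st x) (st x, st x) = (st x, st x)" using AE[OF sE sE] E0id[OF sE] idI[OF E0I[OF sE]] by simp
    fix q r assume qr: "q \<in> W" "r \<in> W"
    obtain g y g' y' where fu: "q = (g,y)" "r = (g',y')" by (cases q, cases r) auto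
    have hq: "g \<in> I" "y \<in> S0" "g' \<in> I" "y' \<in> S0" using qr fu W_iff by auto
    have gL: "g \<in> Lclass I mI (pl y)" "g' \<in> Lclass I mI (pl y')" using W_Lc qr fu by auto
    have aI: "act x g \<in> I" "act x g' \<in> I" using act_in h hq by auto
    have plI': "pl x \<in> I" using plI h by auto
    have "(mI e (act x g) = mI e (act x g') \<and> mS x y = mS x y') \<longleftrightarrow>
          (mI (st x) (act (st x) g) = mI (st x) (act (st x) g') \<and> mS (st x) y = mS (st x) y')"
    proof
      assume a: "mI e (act x g) = mI e (act x g') \<and> mS x y = mS x y'"
      have "mI (pl x) (act x g) = mI (mI (pl x) e) (act x g)" using h by simp
      also have "\<dots> = mI (pl x) (mI e (act x g))" using asI[OF plI' h(1) aI(1)] .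
      also have "\<dots> = mI (pl x) (mI e (act x g'))" using a by simp
      also have "\<dots> = mI (mI (pl x) e) (act x g')" using asI[OF plI' h(1) aI(2)] by simp
      also have "\<dots> = mI (pl x) (act x g')" using h by simp
      finally have "mI (pl x) (act x g) = mI (pl x) (act x g')" .
      then show "mI (st x) (act (st x) g) = mI (st x) (act (st x) g') \<and> mS (st x) y = mS (st x) y'"
        using cond2[OF h(2) hq(2) hq(4) gL] a by simp
    next
      assume a: "mI (st x) (act (st x) g) = mI (st x) (act (st x) g') \<and> mS (st x) y = mS (st x) y'"
      have sS: "st x \<in> S0" "st x \<in> I" using stS stI h by auto
      have xy: "mS x y = mS x y'"
        using as0[OF h(2) sS(1) hq(2)] as0[OF h(2) sS(1) hq(4)] a stm[OF h(2)] by metis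
      have k: "mI (pl x) (act x g) = act x (mI (st x) (act (st x) g))" if "g \<in> I" for g
      proof -
        have "act x g = act x (act (st x) g)" using act_comp[OF h(2) sS(1) that] stm[OF h(2)] by simp
        moreover have "act x (mI (st x) (act (st x) g)) = mI (pl x) (act x (act (st x) g))"
          using act_dist[OF h(2) sS(2) act_in[OF sS(1) that]] axs by simp
        ultimately show ?thesis by simp
      qed
      have pq: "mI (pl x) (act x g) = mI (pl x) (act x g')" using k[OF hq(1)] k[OF hq(3)] a by simp
      have "mI e (act x g) = mI (mI e (pl x)) (act x g)" using h by simp
      also have "\<dots> = mI e (mI (pl x) (act x g))" using asI[OF h(1) plI' aI(1)] .
      also have "\<dots> = mI e (mI (pl x) (act x g'))" using pq by simp
      also have "\<dots> = mI (mI e (pl x)) (act x g')" using asI[OF h(1) plI' aI(2)] by simp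
      also have "\<dots> = mI e (act x g')" using h by simp
      finally show "mI e (act x g) = mI e (act x g') \<and> mS x y = mS x y'" using xy by simp
    qed
    then show "rv Wm q (e, x) = rv Wm r (e, x) \<longleftrightarrow> rv Wm q (st x, st x) = rv Wm r (st x, st x)"
      using fu by simp
  qed
  then show ?thesis by (simp add: Lstar_rv)
qed

lemma W_abundant: "abundant W Wm"
proof -
  have "\<exists>q\<in>idems W Wm. Rstar W Wm p q" if "p \<in> W" for p
  proof -
    obtain e x where p: "p = (e,x)" by (cases p) auto
    have x: "x \<in> S0" using that p W_iff by auto
    show ?thesis using W_R that p W_idems[OF Wplus_in] plE[OF x] by (metis (no_types, lifting))
  qed
  moreover have "\<exists>q\<in>idems W Wm. Lstar W Wm p q" if "p \<in> W" for p
  proof -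
    obtain e x where p: "p = (e,x)" by (cases p) auto
    have x: "x \<in> S0" using that p W_iff by auto
    have "(st x, st x) \<in> idems W Wm" using W_idems[OF Wstar_in[OF x]] stE[OF x] by simp
    then show ?thesis using W_L that p by blast
  qed
  ultimately show ?thesis using sgW by (simp add: abundant_def)
qed

lemma W_left_adequate: "left_adequate W Wm"
proof -
  have "\<exists>!q. q \<in> idems W Wm \<and> Rstar W Wm p q" if "p \<in> W" for p
  proof -
    obtain e x where p: "p = (e,x)" by (cases p) auto
    have x: "x \<in> S0" using that p W_iff by auto
    have "(e, pl x) \<in> idems W Wm" using W_idems[OF Wplus_in] that p plE[OF x] by simp
    then show ?thesis using W_R W_R_uniq that p by blast
  qed
  then show ?thesis using W_abundant by (simp add: left_adequate_def)
qed

lemma W_quasi: "quasi_adequate W Wm"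
proof -
  have "Wm p q \<in> idems W Wm" if "p \<in> idems W Wm" "q \<in> idems W Wm" for p q
  proof -
    obtain e x f y where pq: "p = (e,x)" "q = (f,y)" by (cases p, cases q) auto
    have W: "(e,x) \<in> W" "(f,y) \<in> W" using that pq by (auto simp: idems_def)
    have E: "x \<in> E0" "y \<in> E0" using W_idems W that pq by auto
    have "(mI e (act x f), mS x y) \<in> W" using W_closed[OF W] .
    then show ?thesis using W_idems E0cl[OF E] pq by simp
  qed
  then show ?thesis using W_abundant by (simp add: quasi_adequate_def)
qed


definition "gT x = (pl x, x)"
definition "TT = gT ` S0"

lemma gW: "x \<in> S0 \<Longrightarrow> gT x \<in> W"
  unfolding gT_def using W_iff plS plI idI by auto

lemma g_hom: assumes "x \<in> S0" "y \<in> S0" shows "Wm (gT x) (gT y) = gT (mS x y)"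
proof -
  have "act x (pl y) = pl (mS x y)" using cond1 assms by simp
  moreover have "mI (pl x) (pl (mS x y)) = pl (mS x y)"
    using mIS[OF plE plE] plle assms cl0 by simp
  ultimately show ?thesis unfolding gT_def by simp
qed

lemma TT_W: "TT \<subseteq> W" unfolding TT_def using gW by auto

lemma TT_g: "t \<in> TT \<Longrightarrow> snd t \<in> S0 \<and> t = gT (snd t)" unfolding TT_def gT_def by auto

lemma sgT: "semigroup TT Wm"
proof -
  have "Wm p q \<in> TT" if "p \<in> TT" "q \<in> TT" for p q
    using that g_hom cl0 unfolding TT_def by auto
  moreover have "Wm (Wm p q) r = Wm p (Wm q r)" if "p \<in> TT" "q \<in> TT" "r \<in> TT" for p q r
    using sg_assoc[OF sgW] that TT_W by blast
  ultimately show ?thesis by (simp add: semigroup_def)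
qed

lemma isoT: "iso_hyp TT Wm S0 mS snd"
proof -
  have "bij_betw snd TT S0"
    unfolding bij_betw_def inj_on_def TT_def gT_def by (auto simp: image_iff)
  moreover have "snd (Wm x y) = mS (snd x) (snd y)" if "x \<in> TT" "y \<in> TT" for x y
    using that unfolding TT_def gT_def by auto
  ultimately show ?thesis using sgT sg0 by (simp add: iso_hyp_def)
qed

lemma T_la: "left_ample TT Wm" using iso_left_ample[OF isoT la] .
lemma T_ad: "adequate TT Wm" using T_la by (simp add: left_ample_def)

lemma T_plus: assumes x: "x \<in> S0" shows "aplus TT Wm (gT x) = (pl x, pl x)"
proof -
  have gx: "gT x \<in> TT" using x unfolding TT_def by auto
  have "snd (aplus TT Wm (gT x)) = pl x" using iso_aplus[OF isoT ad gx] by (simp add: gT_def)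
  moreover have "aplus TT Wm (gT x) \<in> TT"
    using runiq_plus(1)[OF adequate_runiq[OF T_ad] gx] by (simp add: idems_def)
  ultimately show ?thesis using TT_g plid[OF plE[OF x]] unfolding gT_def by metis
qed

lemma T_star: assumes x: "x \<in> S0" shows "astar TT Wm (gT x) = (st x, st x)"
proof -
  have gx: "gT x \<in> TT" using x unfolding TT_def by auto
  have iso': "iso_hyp TT (rv Wm) S0 (rv mS) snd" using iso_rv[OF isoT] .
  have "snd (aplus TT (rv Wm) (gT x)) = aplus S0 (rv mS) x"
    using iso_aplus[OF iso' adequate_rv[OF ad] gx] by (simp add: gT_def)
  then have "snd (astar TT Wm (gT x)) = st x" by (simp add: astar_rv)
  moreover have "astar TT Wm (gT x) \<in> TT"
    using runiq_plus(1)[OF adequate_runiq[OF adequate_rv[OF T_ad]] gx] by (simp add: idems_def astar_rv)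
  ultimately show ?thesis using TT_g plid[OF stE[OF x]] unfolding gT_def by metis
qed

lemma T_abundant: "abundant TT Wm" using T_ad by (simp add: adequate_def)

lemma T_star_sub: "star_subsemigroup TT W Wm"
proof -
  have R: "Rstar TT Wm a b \<longleftrightarrow> Rstar W Wm a b" if ab: "a \<in> TT" "b \<in> TT" for a b
  proof -
    obtain x y where xy: "x \<in> S0" "y \<in> S0" "a = gT x" "b = gT y" using TT_g[OF ab(1)] TT_g[OF ab(2)] by blast
    have u: "runiq TT Wm" using adequate_runiq[OF T_ad] .
    show ?thesis
    proof (rule star_sub_R[OF sgW TT_W sgT ab runiq_plus(1)[OF u ab(1)] runiq_plus(1)[OF u ab(2)]
          runiq_plus(2)[OF u ab(1)] runiq_plus(2)[OF u ab(2)]])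
      show "Rstar W Wm a (aplus TT Wm a)" "Rstar W Wm b (aplus TT Wm b)"
        using T_plus xy W_R gW unfolding gT_def by auto
    qed
  qed
  have L: "Lstar TT Wm a b \<longleftrightarrow> Lstar W Wm a b" if ab: "a \<in> TT" "b \<in> TT" for a b
  proof -
    obtain x y where xy: "x \<in> S0" "y \<in> S0" "a = gT x" "b = gT y" using TT_g[OF ab(1)] TT_g[OF ab(2)] by blast
    have u: "runiq TT (rv Wm)" using adequate_runiq[OF adequate_rv[OF T_ad]] .
    have "Rstar TT (rv Wm) a b \<longleftrightarrow> Rstar W (rv Wm) a b"
    proof (rule star_sub_R[OF semigroup_rv[OF sgW] TT_W semigroup_rv[OF sgT] ab runiq_plus(1)[OF u ab(1)] runiq_plus(1)[OF u ab(2)]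
          runiq_plus(2)[OF u ab(1)] runiq_plus(2)[OF u ab(2)]])
      show "Rstar W (rv Wm) a (aplus TT (rv Wm) a)" "Rstar W (rv Wm) b (aplus TT (rv Wm) b)"
        using T_star[folded astar_rv] xy W_L gW unfolding gT_def astar_rv Lstar_rv by auto
    qed
    then show ?thesis by (simp add: Lstar_rv)
  qed
  show ?thesis unfolding star_subsemigroup_def using TT_W W_abundant T_abundant R L by blast
qed

lemma decomp_ex: assumes w: "(e,x) \<in> W"
  shows "decomp W Wm TT (e,x) (e, pl x) (gT x) (st x, st x)"
proof -
  have h: "e \<in> I" "x \<in> S0" "mI e (pl x) = e" "mI (pl x) e = pl x" using w W_iff by auto
  have pE: "pl x \<in> E0" using plE h by auto
  have sE: "st x \<in> E0" using stE h by auto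
  have gx: "gT x \<in> TT" using h unfolding TT_def by auto
  have i1: "(e, pl x) \<in> idems W Wm" using W_idems[OF Wplus_in[OF w]] pE by simp
  have i2: "(st x, st x) \<in> idems W Wm" using W_idems[OF Wstar_in[OF h(2)]] sE by simp
  have i3: "(pl x, pl x) \<in> idems W Wm" using W_idems gW[OF plS[OF h(2)]] plid[OF pE] pE unfolding gT_def by simp
  have pp: "act (pl x) (pl x) = pl x" using AE[OF pE pE] E0id[OF pE] by simp
  have eL: "e \<in> Lclass I mI (pl x)" using W_Lc[OF w] .
  have aL: "act (pl x) e \<in> Lclass I mI (pl x)" using A3L[OF pE eL] .
  have "mI (pl x) (act (pl x) e) = pl x" using aL Lclass_iff by simp
  then have gL: "greenL W Wm (e, pl x) (aplus TT Wm (gT x))"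
    using greenL_idem_iff[OF sgW i1 i3] T_plus[OF h(2)] pp h(3) E0id[OF pE] by simp
  have gR: "greenR W Wm (st x, st x) (astar TT Wm (gT x))"
    using T_star[OF h(2)] greenR_refl Wstar_in[OF h(2)] by simp
  have axs: "act x (st x) = pl x" using A1[OF h(2) sE] stm[OF h(2)] by simp
  have "Wm (Wm (e, pl x) (gT x)) (st x, st x) = (e,x)"
    using pp h(3) plm[OF h(2)] axs stm[OF h(2)] unfolding gT_def by simp
  then show ?thesis unfolding decomp_def using gx i1 i2 gL gR by simp
qed

lemma decomp_uniq: assumes w: "w \<in> W" and d: "decomp W Wm TT w e t f"
  shows "t = gT (snd w)"
proof -
  have d': "t \<in> TT" "e \<in> idems W Wm" "f \<in> idems W Wm" "w = Wm (Wm e t) f"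
    "greenL W Wm e (aplus TT Wm t)" "greenR W Wm f (astar TT Wm t)" using d by (auto simp: decomp_def)
  obtain y where y: "y \<in> S0" "t = gT y" using TT_g[OF d'(1)] by blast
  obtain e1 u f1 v where ef: "e = (e1,u)" "f = (f1,v)" by (cases e, cases f) auto
  have eW: "(e1,u) \<in> W" "(f1,v) \<in> W" using d' ef by (auto simp: idems_def)
  have uv: "u \<in> E0" "v \<in> E0" using W_idems eW d' ef by auto
  have pE: "pl y \<in> E0" and sE: "st y \<in> E0" using plE stE y by auto
  have i3: "(pl y, pl y) \<in> idems W Wm" using W_idems gW[OF plS[OF y(1)]] plid[OF pE] pE unfolding gT_def by simp
  have i4: "(st y, st y) \<in> idems W Wm" using W_idems[OF Wstar_in[OF y(1)]] sE by simp
  have "Wm (e1,u) (pl y, pl y) = (e1,u) \<and> Wm (pl y, pl y) (e1,u) = (pl y, pl y)"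
    using greenL_idem_iff[OF sgW _ i3] d'(2,5) ef T_plus[OF y(1)] y by simp
  then have "mS u (pl y) = u" "mS (pl y) u = pl y" by auto
  then have u: "u = pl y" using E0comm[OF uv(1) pE] by simp
  have "Wm (st y, st y) (f1,v) = (f1,v) \<and> Wm (f1,v) (st y, st y) = (st y, st y)"
    using greenR_idem_iff[OF sgW _ i4] d'(3,6) ef T_star[OF y(1)] y by simp
  then have "mS (st y) v = v" "mS v (st y) = st y" by auto
  then have v: "v = st y" using E0comm[OF uv(2) sE] by simp
  have "snd w = mS (mS (pl y) y) (st y)" using d'(4) ef u v y unfolding gT_def by simp
  then have "snd w = y" using plm[OF y(1)] stm[OF y(1)] by simp
  then show ?thesis using y by simp
qed

lemma bar_W: assumes w: "w \<in> W" shows "bar W Wm TT w = gT (snd w)"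
proof -
  obtain e x where ex: "w = (e,x)" by (cases w) auto
  have x: "x \<in> S0" using w ex W_iff by auto
  have gx: "gT x \<in> TT" using x unfolding TT_def by auto
  have "decomp W Wm TT w (e, pl x) (gT (snd w)) (st x, st x)" using decomp_ex w ex by simp
  then have "\<exists>e f. decomp W Wm TT w e (gT (snd w)) f" by blast
  then have ex1: "gT (snd w) \<in> TT \<and> (\<exists>e f. decomp W Wm TT w e (gT (snd w)) f)" using gx ex by simp
  show ?thesis unfolding bar_def
  proof (rule the_equality)
    show "gT (snd w) \<in> TT \<and> (\<exists>e f. decomp W Wm TT w e (gT (snd w)) f)" using ex1 .
    fix t assume "t \<in> TT \<and> (\<exists>e f. decomp W Wm TT w e t f)"
    then obtain e' f' where "decomp W Wm TT w e' t f'" by blast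
    then show "t = gT (snd w)" using decomp_uniq[OF w] by blast
  qed
qed

lemma W_transversal: "adequate_transversal W Wm TT"
proof -
  have "\<exists>!t. t \<in> TT \<and> (\<exists>e f. decomp W Wm TT w e t f)" if w: "w \<in> W" for w
  proof -
    obtain e x where ex: "w = (e,x)" by (cases w) auto
    have x: "x \<in> S0" using w ex W_iff by auto
    have gx: "gT x \<in> TT" using x unfolding TT_def by auto
    have "decomp W Wm TT w (e, pl x) (gT (snd w)) (st x, st x)" using decomp_ex w ex by simp
    then have e1: "gT (snd w) \<in> TT \<and> (\<exists>e f. decomp W Wm TT w e (gT (snd w)) f)" using gx ex by auto
    show ?thesis
    proof (rule ex1I[where a="gT (snd w)"])
      show "gT (snd w) \<in> TT \<and> (\<exists>e f. decomp W Wm TT w e (gT (snd w)) f)" using e1 .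
      fix t assume "t \<in> TT \<and> (\<exists>e f. decomp W Wm TT w e t f)"
      then obtain e' f' where "decomp W Wm TT w e' t f'" by blast
      then show "t = gT (snd w)" using decomp_uniq[OF w] by blast
    qed
  qed
  then show ?thesis unfolding adequate_transversal_def using W_abundant T_ad T_star_sub by blast
qed

lemma W_admissible: "admissible W Wm TT"
proof -
  have "bar W Wm TT (Wm p q) = Wm (bar W Wm TT p) (bar W Wm TT q)" if "p \<in> W" "q \<in> W" for p q
  proof -
    have pq: "Wm p q \<in> W" using sg_closed[OF sgW that] .
    have s: "snd p \<in> S0" "snd q \<in> S0" using W_sub that by auto
    have "snd (Wm p q) = mS (snd p) (snd q)" by (simp add: Wmult_def)
    then show ?thesis using bar_W[OF pq] bar_W that g_hom[OF s] by simp
  qed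
  then show ?thesis by (simp add: admissible_def)
qed

definition "JJ = {p \<in> W. snd p \<in> E0}"

lemma Iset_JJ: "Iset W Wm TT = JJ"
proof
  show "Iset W Wm TT \<subseteq> JJ"
  proof
    fix e assume "e \<in> Iset W Wm TT"
    then obtain w t f where "w \<in> W" "decomp W Wm TT w e t f" by (auto simp: Iset_def)
    then have ei: "e \<in> idems W Wm" by (simp add: decomp_def)
    obtain e1 u where eu: "e = (e1,u)" by (cases e) auto
    have "e \<in> W" using ei by (simp add: idems_def)
    then show "e \<in> JJ" using W_idems ei eu unfolding JJ_def by auto
  qed
next
  show "JJ \<subseteq> Iset W Wm TT"
  proof
    fix p assume p: "p \<in> JJ"
    obtain f u where fu: "p = (f,u)" by (cases p) auto
    have pW: "(f,u) \<in> W" and uE: "u \<in> E0" using p fu unfolding JJ_def by auto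
    have "decomp W Wm TT (f,u) (f, pl u) (gT u) (st u, st u)" using decomp_ex[OF pW] .
    then have "decomp W Wm TT (f,u) (f, u) (gT u) (st u, st u)" using plid[OF uE] by simp
    then show "p \<in> Iset W Wm TT" using pW fu unfolding Iset_def by blast
  qed
qed

lemma JJ_iso: assumes c3: "\<forall>e\<in>I. \<forall>x\<in>S0. act (pl x) e = mI (pl x) e"
  shows "iso_hyp JJ Wm I mI fst"
proof -
  have JJid: "JJ = idems W Wm"
  proof (intro set_eqI)
    fix p :: "'a \<times> 'a"
    obtain e x where p: "p = (e,x)" by (cases p) auto
    have "p \<in> idems W Wm \<longleftrightarrow> p \<in> W \<and> p \<in> idems W Wm" by (auto simp: idems_def)
    then show "p \<in> JJ \<longleftrightarrow> p \<in> idems W Wm" unfolding JJ_def using W_idems p by auto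
  qed
  have sgJ: "semigroup JJ Wm"
  proof -
    have "Wm p q \<in> JJ" if "p \<in> JJ" "q \<in> JJ" for p q
      using W_quasi that JJid by (simp add: quasi_adequate_def)
    moreover have "Wm (Wm p q) r = Wm p (Wm q r)" if "p \<in> JJ" "q \<in> JJ" "r \<in> JJ" for p q r
      using sg_assoc[OF sgW] that unfolding JJ_def by blast
    ultimately show ?thesis by (simp add: semigroup_def)
  qed
  have JL: "p \<in> JJ \<longleftrightarrow> snd p \<in> E0 \<and> fst p \<in> Lclass I mI (snd p)" for p
  proof -
    obtain f u where fu: "p = (f,u)" by (cases p) auto
    have "(f,u) \<in> W \<longleftrightarrow> f \<in> Lclass I mI (pl u)" if "u \<in> E0"
      using W_iff Lclass_iff E0S[OF that] plI[OF E0S[OF that]] by auto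
    then show ?thesis using fu plid unfolding JJ_def by auto
  qed
  have inj: "inj_on fst JJ"
  proof (rule inj_onI)
    fix p q assume pq: "p \<in> JJ" "q \<in> JJ" "fst p = fst q"
    obtain f u g v where fu: "p = (f,u)" "q = (g,v)" by (cases p, cases q) auto
    have h: "u \<in> E0" "v \<in> E0" "f \<in> Lclass I mI u" "f \<in> Lclass I mI v" using pq fu JL by auto
    have uvI: "u \<in> I" "v \<in> I" "f \<in> I" using E0I h by (auto simp: Lclass_iff)
    have "mI u v = u" using Lsame[OF uvI(1,2,3)] h(3,4) unfolding Lclass_iff by auto
    moreover have "mI v u = v" using Lsame[OF uvI(2,1,3)] h(3,4) unfolding Lclass_iff by auto
    ultimately have "u = v" using mIS[OF h(1,2)] mIS[OF h(2,1)] E0comm[OF h(1,2)] by simp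
    then show "p = q" using fu pq by simp
  qed
  have surj: "fst ` JJ = I"
  proof
    show "fst ` JJ \<subseteq> I" using JL by (auto simp: Lclass_iff)
    show "I \<subseteq> fst ` JJ"
    proof
      fix a assume a: "a \<in> I"
      then obtain x where x: "x \<in> E0" "a \<in> Lclass I mI x" using Iun by blast
      then have "(a,x) \<in> JJ" using JL by simp
      then show "a \<in> fst ` JJ" by force
    qed
  qed
  have hom: "fst (Wm p q) = mI (fst p) (fst q)" if "p \<in> JJ" "q \<in> JJ" for p q
  proof -
    obtain e x f y where fu: "p = (e,x)" "q = (f,y)" by (cases p, cases q) auto
    have h: "x \<in> E0" "e \<in> Lclass I mI x" "f \<in> Lclass I mI y" using that fu JL by auto
    have eI: "e \<in> I" "f \<in> I" "x \<in> I" "mI e x = e" using h Lclass_iff by auto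
    have "act (pl x) f = mI (pl x) f" using c3 eI(2) E0S[OF h(1)] by blast
    then have "act x f = mI x f" using plid[OF h(1)] by simp
    then have "mI e (act x f) = mI e f" using asI[OF eI(1,3,2)] eI(4) by simp
    then show ?thesis using fu by simp
  qed
  show ?thesis unfolding iso_hyp_def bij_betw_def using sgJ sgI inj surj hom by blast
qed

lemma part1:
  "left_adequate W Wm \<and> quasi_adequate W Wm
   \<and> (\<exists>T. adequate_transversal W Wm T \<and> admissible W Wm T \<and> left_ample T Wm \<and> sg_iso T Wm S0 mS
      \<and> ((\<forall>e\<in>I. \<forall>x\<in>S0. act (pl x) e = mI (pl x) e) \<longrightarrow> sg_iso (Iset W Wm T) Wm I mI))"
proof -
  have "(\<forall>e\<in>I. \<forall>x\<in>S0. act (pl x) e = mI (pl x) e) \<longrightarrow> sg_iso (Iset W Wm TT) Wm I mI"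
    using iso_sg_iso[OF JJ_iso] unfolding Iset_JJ by blast
  then show ?thesis using W_left_adequate W_quasi W_transversal W_admissible T_la iso_sg_iso[OF isoT]
    by blast
qed

end


lemma Lstar_Some: "Lstar S m a b \<Longrightarrow> x\<in>S \<Longrightarrow> y\<in>S \<Longrightarrow> m a x = m a y \<longleftrightarrow> m b x = m b y"
  using Rstar_Some[of S "rv m" a b x y] by (simp add: Lstar_rv)

locale D =
  fixes S :: "'b set" and m and T
  assumes A: "left_adequate S m \<and> quasi_adequate S m \<and> adequate_transversal S m T \<and> left_ample T m \<and> admissible S m T"
begin

abbreviation "E \<equiv> idems S m"
abbreviation "E0 \<equiv> idems T m"
abbreviation "p \<equiv> aplus S m"
abbreviation "tp \<equiv> aplus T m"
abbreviation "ts \<equiv> astar T m"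
abbreviation "br \<equiv> bar S m T"

lemma lad: "left_adequate S m" using A by blast
lemma qa: "quasi_adequate S m" using A by blast
lemma at: "adequate_transversal S m T" using A by blast
lemma laT: "left_ample T m" using A by blast
lemma adm: "admissible S m T" using A by blast
lemma sgS: "semigroup S m" using lad by (simp add: left_adequate_def abundant_def)
lemma uS: "runiq S m" using left_adequate_runiq[OF lad] .
lemma adT: "adequate T m" using laT by (simp add: left_ample_def)
lemma sgT: "semigroup T m" using adequate_sg[OF adT] .
lemma uT: "runiq T m" using adequate_runiq[OF adT] .
lemma uTr: "runiq T (rv m)" using adequate_runiq[OF adequate_rv[OF adT]] .
lemma ssub: "star_subsemigroup T S m" using at by (simp add: adequate_transversal_def)
lemma TS: "T \<subseteq> S" using ssub by (simp add: star_subsemigroup_def)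
lemma tS: "t \<in> T \<Longrightarrow> t \<in> S" using TS by blast
lemma RTS: "a \<in> T \<Longrightarrow> b \<in> T \<Longrightarrow> Rstar T m a b \<longleftrightarrow> Rstar S m a b"
  using ssub by (simp add: star_subsemigroup_def)
lemma LTS: "a \<in> T \<Longrightarrow> b \<in> T \<Longrightarrow> Lstar T m a b \<longleftrightarrow> Lstar S m a b"
  using ssub by (simp add: star_subsemigroup_def)
lemma uniq_all: "\<forall>x\<in>S. \<exists>!t. t \<in> T \<and> (\<exists>e f. decomp S m T x e t f)"
  using at by (simp add: adequate_transversal_def)
lemma qaE: "e \<in> E \<Longrightarrow> f \<in> E \<Longrightarrow> m e f \<in> E" using qa by (simp add: quasi_adequate_def)
lemma admx: "x \<in> S \<Longrightarrow> y \<in> S \<Longrightarrow> br (m x y) = m (br x) (br y)" using adm by (simp add: admissible_def)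
lemma laTx: "a \<in> T \<Longrightarrow> e \<in> E0 \<Longrightarrow> m a e = m (tp (m a e)) a" using laT by (simp add: left_ample_def)

lemma clS: "a \<in> S \<Longrightarrow> b \<in> S \<Longrightarrow> m a b \<in> S" using sg_closed[OF sgS] .
lemma asS: "a \<in> S \<Longrightarrow> b \<in> S \<Longrightarrow> c \<in> S \<Longrightarrow> m (m a b) c = m a (m b c)" using sg_assoc[OF sgS] .
lemma clT: "a \<in> T \<Longrightarrow> b \<in> T \<Longrightarrow> m a b \<in> T" using sg_closed[OF sgT] .

lemma ES: "e \<in> E \<Longrightarrow> e \<in> S" by (simp add: idems_def)
lemma Eid: "e \<in> E \<Longrightarrow> m e e = e" by (simp add: idems_def)
lemma E0T: "e \<in> E0 \<Longrightarrow> e \<in> T" by (simp add: idems_def)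
lemma E0E: "e \<in> E0 \<Longrightarrow> e \<in> E" using TS by (auto simp: idems_def)
lemma E0comm: "e \<in> E0 \<Longrightarrow> f \<in> E0 \<Longrightarrow> m e f = m f e" using adequate_comm[OF adT] .
lemma E0cl: "e \<in> E0 \<Longrightarrow> f \<in> E0 \<Longrightarrow> m e f \<in> E0" using adequate_idem_closed[OF adT] .

lemma tpE: "t \<in> T \<Longrightarrow> tp t \<in> E0" using runiq_plus(1)[OF uT] .
lemma tpR: "t \<in> T \<Longrightarrow> Rstar T m t (tp t)" using runiq_plus(2)[OF uT] .
lemma tpm: "t \<in> T \<Longrightarrow> m (tp t) t = t" using runiq_plus_mult[OF uT] .
lemma tpid: "e \<in> E0 \<Longrightarrow> tp e = e" using runiq_plus_idem[OF uT] .
lemma tsE: "t \<in> T \<Longrightarrow> ts t \<in> E0" using runiq_plus(1)[OF uTr] by (simp add: astar_rv)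
lemma tsL: "t \<in> T \<Longrightarrow> Lstar T m t (ts t)" using runiq_plus(2)[OF uTr] by (simp add: astar_rv Lstar_rv)
lemma tsm: "t \<in> T \<Longrightarrow> m t (ts t) = t" using runiq_plus_mult[OF uTr] by (simp add: astar_rv)
lemma tpT: "t \<in> T \<Longrightarrow> tp t \<in> T" using E0T[OF tpE] .
lemma tsT: "t \<in> T \<Longrightarrow> ts t \<in> T" using E0T[OF tsE] .

lemma tpRS: "t \<in> T \<Longrightarrow> Rstar S m t (tp t)" using RTS[OF _ tpT] tpR by blast
lemma tsLS: "t \<in> T \<Longrightarrow> Lstar S m t (ts t)" using LTS[OF _ tsT] tsL by blast

lemma pE: "s \<in> S \<Longrightarrow> p s \<in> E" using runiq_plus(1)[OF uS] .
lemma pR: "s \<in> S \<Longrightarrow> Rstar S m s (p s)" using runiq_plus(2)[OF uS] .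
lemma p_eq: "s \<in> S \<Longrightarrow> e \<in> E \<Longrightarrow> Rstar S m s e \<Longrightarrow> p s = e" using runiq_plus_eq[OF uS] .
lemma pid: "e \<in> E \<Longrightarrow> p e = e" using runiq_plus_idem[OF uS] .
lemma p_cong: "Rstar S m a b \<Longrightarrow> p a = p b" using runiq_plus_cong[OF uS] .
lemma pT: "t \<in> T \<Longrightarrow> p t = tp t" using p_eq[OF tS E0E[OF tpE] tpRS] .

lemma br_ex: assumes s: "s \<in> S" shows "br s \<in> T \<and> (\<exists>e f. decomp S m T s e (br s) f)"
proof -
  have "\<exists>!t. t \<in> T \<and> (\<exists>e f. decomp S m T s e t f)" using uniq_all s by blast
  from theI'[OF this] show ?thesis unfolding bar_def .
qed

lemma br_eq: assumes s: "s \<in> S" and d: "decomp S m T s e t f" shows "br s = t"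
proof -
  have "\<exists>!t. t \<in> T \<and> (\<exists>e f. decomp S m T s e t f)" using uniq_all s by blast
  moreover have "t \<in> T \<and> (\<exists>e f. decomp S m T s e t f)" using d by (auto simp: decomp_def)
  ultimately show ?thesis unfolding bar_def by (rule the1_equality)
qed

lemma gLS: "a \<in> E \<Longrightarrow> b \<in> E \<Longrightarrow> greenL S m a b \<longleftrightarrow> m a b = a \<and> m b a = b"
  using greenL_idem_iff[OF sgS] .

lemma D1: assumes s: "s \<in> S" shows "s = m (p s) (br s)" "m (p s) (tp (br s)) = p s" "m (tp (br s)) (p s) = tp (br s)"
proof -
  obtain e f where d: "decomp S m T s e (br s) f" using br_ex[OF s] by blast
  define t where "t = br s"
  have t: "t \<in> T" using br_ex[OF s] t_def by simp
  have d': "e \<in> E" "f \<in> E" "s = m (m e t) f" "greenL S m e (tp t)" "greenR S m f (ts t)"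
    using d unfolding decomp_def t_def by auto
  have tsE': "ts t \<in> E" using E0E[OF tsE[OF t]] .
  have tpE': "tp t \<in> E" using E0E[OF tpE[OF t]] .
  have "m (ts t) f = f \<and> m f (ts t) = ts t" using greenR_idem_iff[OF sgS d'(2) tsE'] d'(5) by simp
  then have "Rstar S m (ts t) f" using Rstar_idem_iff[OF sgS tsE' d'(2)] by simp
  then have "f = ts t" using p_eq[OF ES[OF tsE'] d'(2)] p_eq[OF ES[OF tsE'] tsE' Rstar_refl[OF ES[OF tsE']]] by simp
  then have s': "s = m e t" using d'(3) asS[OF ES[OF d'(1)] tS[OF t] tS[OF tsT[OF t]]] tsm[OF t] by simp
  have eL: "m e (tp t) = e" "m (tp t) e = tp t" using gLS[OF d'(1) tpE'] d'(4) by auto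
  have "Rstar S m (m e t) (m e (tp t))" using Rstar_lcong[OF sgS tpRS[OF t] ES[OF d'(1)]] .
  then have pe: "p s = e" using p_eq[OF s d'(1)] s' eL(1) by simp
  have tb: "br s = t" using t_def by simp
  show "s = m (p s) (br s)" unfolding pe tb by (rule s')
  show "m (p s) (tp (br s)) = p s" "m (tp (br s)) (p s) = tp (br s)" unfolding pe tb using eL by auto
qed

lemma U: assumes g: "g \<in> E" and t: "t \<in> T" and gl: "m g (tp t) = g" "m (tp t) g = tp t"
  shows "br (m g t) = t" "p (m g t) = g"
proof -
  have gS: "g \<in> S" using ES[OF g] .
  have tpE': "tp t \<in> E" using E0E[OF tpE[OF t]] .
  have tsE': "ts t \<in> E" using E0E[OF tsE[OF t]] .
  have gt: "m g t \<in> S" using clS[OF gS tS[OF t]] .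
  have "decomp S m T (m g t) g t (ts t)"
    unfolding decomp_def using t g tsE' gLS[OF g tpE'] gl greenR_refl[OF ES[OF tsE']]
      asS[OF gS tS[OF t] tS[OF tsT[OF t]]] tsm[OF t] by simp
  then show "br (m g t) = t" using br_eq[OF gt] by blast
  have "Rstar S m (m g t) (m g (tp t))" using Rstar_lcong[OF sgS tpRS[OF t] gS] .
  then show "p (m g t) = g" using p_eq[OF gt g] gl(1) by simp
qed

lemma br_T: assumes t: "t \<in> T" shows "br t = t"
proof -
  have tpE': "tp t \<in> E" using E0E[OF tpE[OF t]] .
  have "m (tp t) (tp t) = tp t" using Eid[OF tpE'] .
  then show ?thesis using U(1)[OF tpE' t] tpm[OF t] by simp
qed

lemma idemE: assumes e: "e \<in> E" shows "br e \<in> E0" "m e (br e) = e" "m (br e) e = br e"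
proof -
  have eS: "e \<in> S" using ES[OF e] .
  have bT: "br e \<in> T" using br_ex[OF eS] by blast
  have "br e = m (br e) (br e)" using admx[OF eS eS] Eid[OF e] by simp
  then show bE: "br e \<in> E0" using bT by (simp add: idems_def)
  show "m e (br e) = e" "m (br e) e = br e" using D1[OF eS] pid[OF e] tpid[OF bE] by auto
qed

lemma Iset_E: "Iset S m T = E"
proof
  show "Iset S m T \<subseteq> E" unfolding Iset_def decomp_def by blast
  show "E \<subseteq> Iset S m T"
  proof
    fix e assume e: "e \<in> E"
    have eS: "e \<in> S" using ES[OF e] .
    have bE: "br e \<in> E0" using idemE(1)[OF e] .
    have bT: "br e \<in> T" using E0T[OF bE] .
    have "decomp S m T e e (br e) (ts (br e))"
      unfolding decomp_def using bT e E0E[OF tsE[OF bT]] greenR_refl[OF tS[OF tsT[OF bT]]]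
        asS[OF eS tS[OF bT] tS[OF tsT[OF bT]]] tsm[OF bT] idemE(2,3)[OF e] gLS[OF e E0E[OF bE]] tpid[OF bE]
      by simp
    then show "e \<in> Iset S m T" using eS unfolding Iset_def by blast
  qed
qed

lemma sgE: "semigroup E m"
  unfolding semigroup_def using qaE asS ES by blast

lemma lrbE: "left_regular_band E m"
proof -
  have "m (m e f) e = m e f" if e: "e \<in> E" and f: "f \<in> E" for e f
  proof -
    have S: "e \<in> S" "f \<in> S" using e f ES by auto
    define a where "a = br e"
    define b where "b = br f"
    have ab: "a \<in> E0" "b \<in> E0" using idemE(1) e f a_def b_def by auto
    have efE: "m e f \<in> E" using qaE[OF e f] .
    have efeE: "m (m e f) e \<in> E" using qaE[OF efE e] .
    have b1: "br (m e f) = m a b" using admx S a_def b_def by simp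
    have "br (m (m e f) e) = m (m a b) a" using admx[OF clS[OF S] S(1)] b1 a_def by simp
    also have "\<dots> = m a b"
      using E0comm[OF E0cl[OF ab] ab(1)] sg_assoc[OF sgT, of a a b] E0T ab Eid[OF E0E[OF ab(1)]] by simp
    finally have b2: "br (m (m e f) e) = m a b" .
    have c: "m (m e f) (m a b) = m e f" using idemE(2)[OF efE] b1 by simp
    have c2: "m (m a b) (m (m e f) e) = m a b" using idemE(3)[OF efeE] b2 by simp
    have abS: "m a b \<in> S" using ES[OF E0E[OF E0cl[OF ab]]] .
    have "m (m e f) (m (m e f) e) = m (m (m e f) (m a b)) (m (m e f) e)" using c by simp
    also have "\<dots> = m (m e f) (m (m a b) (m (m e f) e))"
      using asS[OF ES[OF efE] abS ES[OF efeE]] .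
    also have "\<dots> = m e f" using c2 c by simp
    finally have 1: "m (m e f) (m (m e f) e) = m e f" .
    have "m (m e f) (m (m e f) e) = m (m (m e f) (m e f)) e" using asS[OF ES[OF efE] ES[OF efE] S(1)] by simp
    then show ?thesis using 1 Eid[OF efE] by simp
  qed
  then show ?thesis using sgE Eid by (simp add: left_regular_band_def)
qed


lemma E0_sub: "E0 \<subseteq> E" using E0E by blast

lemma slt: "semilattice_transversal E m E0"
proof -
  have A1: "\<forall>e\<in>E0. \<forall>f\<in>E0. m e f \<in> E0 \<and> m e f = m f e \<and> m e e = e"
  proof (intro ballI conjI)
    fix e f assume ef: "e \<in> E0" "f \<in> E0"
    show "m e f \<in> E0" using E0cl[OF ef] .
    show "m e f = m f e" using E0comm[OF ef] .
    show "m e e = e" using ef(1) by (simp add: idems_def)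
  qed
  have "\<exists>!x. x \<in> E0 \<and> m (m a x) a = a \<and> m (m x a) x = x" if a: "a \<in> E" for a
  proof (rule ex1I[where a="br a"])
    have b: "br a \<in> E0" using idemE(1)[OF a] .
    show "br a \<in> E0 \<and> m (m a (br a)) a = a \<and> m (m (br a) a) (br a) = br a"
      using b idemE(2,3)[OF a] Eid[OF a] Eid[OF E0E[OF b]] by simp
    fix x assume x: "x \<in> E0 \<and> m (m a x) a = a \<and> m (m x a) x = x"
    have xE: "x \<in> E0" using x by blast
    have aS: "a \<in> S" and xS: "x \<in> S" using ES[OF a] ES[OF E0E[OF xE]] by auto
    have bx: "br x = x" using br_T[OF E0T[OF xE]] .
    have "br a = br (m (m a x) a)" using x by simp
    also have "\<dots> = m (m (br a) x) (br a)" using admx[OF clS[OF aS xS] aS] admx[OF aS xS] bx by simp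
    finally have 1: "br a = m (m (br a) x) (br a)" .
    have "x = br (m (m x a) x)" using x bx by simp
    also have "\<dots> = m (m x (br a)) x" using admx[OF clS[OF xS aS] xS] admx[OF xS aS] bx by simp
    finally have 2: "x = m (m x (br a)) x" .
    have bE: "br a \<in> E0" using idemE(1)[OF a] .
    have bT: "br a \<in> T" "x \<in> T" using E0T bE xE by auto
    have i: "m (br a) (br a) = br a" "m x x = x" using Eid[OF E0E[OF bE]] Eid[OF E0E[OF xE]] by auto
    have c: "m (br a) x = m x (br a)" using E0comm[OF bE xE] .
    have h1: "br a = m (br a) x"
      using 1 c sg_assoc[OF sgT bT(2) bT(1) bT(1)] i by simp
    have h2: "x = m x (br a)"
      using 2 c sg_assoc[OF sgT bT(1) bT(2) bT(2)] i by simp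
    show "x = br a" using h1 h2 c by simp
  qed
  then have U: "\<forall>a\<in>E. \<exists>!x. x \<in> E0 \<and> m (m a x) a = a \<and> m (m x a) x = x" by blast
  show ?thesis unfolding semilattice_transversal_def using E0_sub A1 U by (intro conjI) assumption+
qed

lemma LcE: "a \<in> E \<Longrightarrow> x \<in> E \<Longrightarrow> a \<in> Lclass E m x \<longleftrightarrow> m a x = a \<and> m x a = x"
proof -
  assume ax: "a \<in> E" "x \<in> E"
  have ai: "a \<in> idems E m" "x \<in> idems E m" using idemsI[of a E m, OF ax(1) Eid[OF ax(1)]] idemsI[of x E m, OF ax(2) Eid[OF ax(2)]] by auto
  have "a \<in> Lclass E m x \<longleftrightarrow> greenL E m a x" by (simp add: Lclass_def)
  then show ?thesis using greenL_idem_iff[OF sgE ai] by simp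
qed

lemma LcE_in: "a \<in> Lclass E m x \<Longrightarrow> a \<in> E \<and> x \<in> E"
  by (simp add: Lclass_def greenL_def)

lemma Eun: "E = (\<Union>x\<in>E0. Lclass E m x)"
proof
  show "E \<subseteq> (\<Union>x\<in>E0. Lclass E m x)"
  proof
    fix a assume a: "a \<in> E"
    have "a \<in> Lclass E m (br a)" using LcE[OF a E0E[OF idemE(1)[OF a]]] idemE(2,3)[OF a] by simp
    then show "a \<in> (\<Union>x\<in>E0. Lclass E m x)" using idemE(1)[OF a] by blast
  qed
  show "(\<Union>x\<in>E0. Lclass E m x) \<subseteq> E"
  proof
    fix a assume "a \<in> (\<Union>x\<in>E0. Lclass E m x)"
    then obtain x where "a \<in> Lclass E m x" by blast
    then show "a \<in> E" using LcE_in by blast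
  qed
qed

definition "act x e = p (m x e)"

lemma act_in: assumes "x \<in> T" "e \<in> E" shows "act x e \<in> E"
  unfolding act_def using pE[OF clS[OF tS[OF assms(1)] ES[OF assms(2)]]] .

lemma act_comp: assumes x: "x \<in> T" and y: "y \<in> T" and e: "e \<in> E"
  shows "act (m x y) e = act x (act y e)"
proof -
  have S: "x \<in> S" "y \<in> S" "e \<in> S" using x y e tS ES by auto
  have ye: "m y e \<in> S" using clS S by blast
  have "Rstar S m (m x (m y e)) (m x (p (m y e)))" using Rstar_lcong[OF sgS pR[OF ye] S(1)] .
  then have "p (m x (m y e)) = p (m x (p (m y e)))" by (rule p_cong)
  then show ?thesis unfolding act_def using asS S by simp
qed

lemma p_left_E0: assumes c: "c \<in> E0" and s: "s \<in> S" shows "p (m c s) = m c (p s)"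
proof -
  have cS: "c \<in> S" using ES[OF E0E[OF c]] .
  have "Rstar S m (m c s) (m c (p s))" using Rstar_lcong[OF sgS pR[OF s] cS] .
  then show ?thesis by (rule p_eq[OF clS[OF cS s] qaE[OF E0E[OF c] pE[OF s]]])
qed

lemma act_dist: assumes x: "x \<in> T" and e: "e \<in> E" and f: "f \<in> E"
  shows "act x (m e f) = m (act x e) (act x f)"
proof -
  have S: "x \<in> S" "e \<in> S" "f \<in> S" using x e f tS ES by auto
  define eb where "eb = br e"
  define fb where "fb = br f"
  have ebE: "eb \<in> E0" "fb \<in> E0" using idemE(1) e f eb_def fb_def by auto
  have ebT: "eb \<in> T" "fb \<in> T" using E0T ebE by auto
  define a where "a = p (m x e)"
  define b where "b = p (m x f)"
  define xe where "xe = m x eb"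
  have xeT: "xe \<in> T" using clT[OF x ebT(1)] xe_def by simp
  define c where "c = tp xe"
  have xeS: "m x e \<in> S" using clS S by blast
  have brxe: "br (m x e) = xe" using admx[OF S(1) S(2)] br_T[OF x] eb_def xe_def by simp
  have d1: "m x e = m a xe" "m a c = a" "m c a = c"
    using D1[OF xeS] brxe a_def c_def by auto
  define s2 where "s2 = m xe f"
  have s2S: "s2 \<in> S" using clS[OF tS[OF xeT] S(3)] s2_def by simp
  define t2 where "t2 = m xe fb"
  have t2T: "t2 \<in> T" using clT[OF xeT ebT(2)] t2_def by simp
  have brs2: "br s2 = t2" using admx[OF tS[OF xeT] S(3)] br_T[OF xeT] s2_def t2_def fb_def by simp
  define q where "q = p s2"
  define d where "d = tp t2"
  have d2: "s2 = m q t2" "m q d = q" "m d q = d" using D1[OF s2S] brs2 q_def d_def by auto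
  have aE: "a \<in> E" "q \<in> E" using pE xeS s2S a_def q_def by auto
  have cE: "c \<in> E0" "d \<in> E0" using tpE xeT t2T c_def d_def by auto
  have cS: "c \<in> S" "d \<in> S" "a \<in> S" "q \<in> S" using ES E0E cE aE by auto
  have cd: "m c d = d" using runiq_plus_le[OF uT sgT xeT ebT(2)] c_def d_def t2_def by simp
  have dc: "m d c = d" using cd E0comm[OF cE] by simp
  have g: "m a q \<in> E" using qaE[OF aE] .
  have "m x (m e f) = m (m x e) f" using asS S by simp
  also have "\<dots> = m a s2" using d1(1) asS[OF cS(3) tS[OF xeT] S(3)] s2_def by simp
  also have "\<dots> = m (m a q) t2" using d2(1) asS[OF cS(3) cS(4) tS[OF t2T]] by simp
  finally have xef: "m x (m e f) = m (m a q) t2" .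
  have g1: "m (m a q) d = m a q" using asS[OF cS(3) cS(4) cS(2)] d2(2) by simp
  have da: "m d a = d"
  proof -
    have "m d a = m (m d c) a" using dc by simp
    also have "\<dots> = m d (m c a)" using asS[OF cS(2) cS(1) cS(3)] .
    finally show ?thesis using d1(3) dc by simp
  qed
  have g2: "m d (m a q) = d" using asS[OF cS(2) cS(3) cS(4)] da d2(3) by simp
  have pxef: "p (m x (m e f)) = m a q" using U(2)[OF g t2T] g1 g2 xef d_def by simp
  have "xe = m c x" using laTx[OF x ebE(1)] xe_def c_def by simp
  then have "s2 = m c (m x f)" using s2_def asS[OF cS(1) S(1) S(3)] by simp
  then have "q = m c b" using p_left_E0[OF cE(1) clS[OF S(1) S(3)]] q_def b_def by simp
  then have "m a q = m a b" using asS[OF cS(3) cS(1) ES[OF pE[OF clS[OF S(1) S(3)]]]] d1(2) b_def by simp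
  then show ?thesis using pxef unfolding act_def a_def b_def by simp
qed

lemma cond1: assumes x: "x \<in> T" and y: "y \<in> T" shows "act x (tp y) = tp (m x y)"
proof -
  have xy: "m x (tp y) \<in> T" using clT[OF x tpT[OF y]] .
  have "Rstar T m (m x y) (m x (tp y))" using Rstar_lcong[OF sgT tpR[OF y] x] .
  then have "tp (m x y) = tp (m x (tp y))" by (rule runiq_plus_cong[OF uT])
  then show ?thesis unfolding act_def using pT[OF xy] by simp
qed

lemma tp_mult: assumes x: "x \<in> T" and y: "y \<in> T" shows "m x (tp y) = m (tp (m x y)) x"
proof -
  have xy: "m x (tp y) \<in> T" using clT[OF x tpT[OF y]] .
  have "Rstar T m (m x y) (m x (tp y))" using Rstar_lcong[OF sgT tpR[OF y] x] .
  then have "tp (m x y) = tp (m x (tp y))" by (rule runiq_plus_cong[OF uT])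
  then show ?thesis using laTx[OF x tpE[OF y]] by simp
qed

lemma cond2: assumes x: "x \<in> T" and x1: "x1 \<in> T" and x2: "x2 \<in> T"
  and e1: "e1 \<in> Lclass E m (tp x1)" and e2: "e2 \<in> Lclass E m (tp x2)"
  and h1: "m (tp x) (act x e1) = m (tp x) (act x e2)" and h2: "m x x1 = m x x2"
  shows "act (ts x) e1 = act (ts x) e2 \<and> m (ts x) x1 = m (ts x) x2"
proof -
  have eE: "e1 \<in> E" "e2 \<in> E" using LcE_in e1 e2 by auto
  have xS: "x \<in> S" using tS[OF x] .
  have k: "m (tp x) (act x e) = act x e" if e: "e \<in> E" for e
  proof -
    have xe: "m x e \<in> S" using clS[OF xS ES[OF e]] .
    have "p (m (tp x) (m x e)) = m (tp x) (p (m x e))" using p_left_E0[OF tpE[OF x] xe] .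
    moreover have "m (tp x) (m x e) = m x e" using asS[OF tS[OF tpT[OF x]] xS ES[OF e]] tpm[OF x] by simp
    ultimately show ?thesis unfolding act_def by simp
  qed
  have g: "act x e1 = act x e2" using h1 k eE by simp
  have be: "br e = tp x1'" "m x e = m (act x e) (m x (tp x1'))"
    if x1': "x1' \<in> T" and e: "e \<in> Lclass E m (tp x1')" for e x1'
  proof -
    have eE': "e \<in> E" using LcE_in e by blast
    have tE: "tp x1' \<in> E0" using tpE[OF x1'] .
    have gl: "m e (tp x1') = e" "m (tp x1') e = tp x1'" using LcE[OF eE' E0E[OF tE]] e by auto
    have "br (m e (tp x1')) = tp x1'" using U(1)[OF eE' tpT[OF x1']] gl tpid[OF tE] by simp
    then show "br e = tp x1'" using gl by simp
    have xe: "m x e \<in> S" using clS[OF xS ES[OF eE']] .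
    have "br (m x e) = m x (tp x1')" using admx[OF xS ES[OF eE']] br_T[OF x] \<open>br e = tp x1'\<close> by simp
    then show "m x e = m (act x e) (m x (tp x1'))" using D1(1)[OF xe] unfolding act_def by simp
  qed
  have "m x (tp x1) = m x (tp x2)" using tp_mult[OF x x1] tp_mult[OF x x2] h2 by simp
  then have xe: "m x e1 = m x e2" using be(2)[OF x1 e1] be(2)[OF x2 e2] g by simp
  have "m (ts x) e1 = m (ts x) e2" using Lstar_Some[OF tsLS[OF x] ES[OF eE(1)] ES[OF eE(2)]] xe by simp
  moreover have "m (ts x) x1 = m (ts x) x2" using Lstar_Some[OF tsL[OF x] x1 x2] h2 by simp
  ultimately show ?thesis unfolding act_def by simp
qed

lemma chyps: "construction_hyps T m E m act"
  unfolding construction_hyps_def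
proof (intro conjI)
  show "left_ample T m" using laT .
  show "left_regular_band E m" using lrbE .
  show "semilattice_transversal E m E0" using slt .
  show "E = (\<Union>x\<in>E0. Lclass E m x)" using Eun .
  show "\<forall>e\<in>E0. \<forall>f\<in>E0. m e f = m e f" by simp
  show "\<forall>x\<in>T. \<forall>e\<in>E. act x e \<in> E" using act_in by blast
  show "\<forall>x\<in>T. \<forall>y\<in>T. \<forall>e\<in>E. act (m x y) e = act x (act y e)" using act_comp by blast
  show "\<forall>x\<in>T. \<forall>e\<in>E. \<forall>f\<in>E. act x (m e f) = m (act x e) (act x f)" using act_dist by blast
  show "\<forall>x\<in>T. \<forall>y\<in>T. act x (tp y) = tp (m x y)" using cond1 by blast
  show "\<forall>x\<in>T. \<forall>x1\<in>T. \<forall>x2\<in>T. \<forall>e1\<in>Lclass E m (tp x1). \<forall>e2\<in>Lclass E m (tp x2).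
     m (tp x) (act x e1) = m (tp x) (act x e2) \<and> m x x1 = m x x2 \<longrightarrow>
     act (ts x) e1 = act (ts x) e2 \<and> m (ts x) x1 = m (ts x) x2"
  proof (intro ballI impI)
    fix x x1 x2 e1 e2
    assume "x \<in> T" "x1 \<in> T" "x2 \<in> T" "e1 \<in> Lclass E m (tp x1)" "e2 \<in> Lclass E m (tp x2)"
      "m (tp x) (act x e1) = m (tp x) (act x e2) \<and> m x x1 = m x x2"
    then show "act (ts x) e1 = act (ts x) e2 \<and> m (ts x) x1 = m (ts x) x2"
      using cond2 by blast
  qed
qed

lemma brE: assumes y: "y \<in> T" and g: "g \<in> E" "m g (tp y) = g" "m (tp y) g = tp y"
  shows "br g = tp y"
proof -
  have tE: "tp y \<in> E0" using tpE[OF y] .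
  have "br (m g (tp y)) = tp y" using U(1)[OF g(1) tpT[OF y]] g(2,3) tpid[OF tE] by simp
  then show ?thesis using g(2) by simp
qed

lemma part2: "sg_iso (Wset T m E m) (Wmult m m act) S m"
proof -
  interpret c: C T m E m act by unfold_locales (rule chyps)
  let ?W = "Wset T m E m"
  let ?h = "\<lambda>q. m (fst q) (snd q)"
  have Wi: "(e,x) \<in> ?W \<longleftrightarrow> e \<in> E \<and> x \<in> T \<and> m e (tp x) = e \<and> m (tp x) e = tp x" for e x
    using c.W_iff by simp
  have inj: "inj_on ?h ?W"
  proof (rule inj_onI)
    fix q r assume q: "q \<in> ?W" and r: "r \<in> ?W" and eq: "?h q = ?h r"
    obtain e x f y where ex: "q = (e,x)" "r = (f,y)" by (cases q, cases r) auto
    have h1: "e \<in> E" "x \<in> T" "m e (tp x) = e" "m (tp x) e = tp x" using q ex Wi by auto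
    have h2: "f \<in> E" "y \<in> T" "m f (tp y) = f" "m (tp y) f = tp y" using r ex Wi by auto
    have "m e x = m f y" using eq ex by simp
    then have "x = y" "e = f" using U[OF h1(1,2) h1(3,4)] U[OF h2(1,2) h2(3,4)] by metis+
    then show "q = r" using ex by simp
  qed
  have img: "?h ` ?W = S"
  proof
    show "?h ` ?W \<subseteq> S"
    proof
      fix s assume "s \<in> ?h ` ?W"
      then obtain e x where "(e,x) \<in> ?W" "s = m e x" by auto
      then show "s \<in> S" using Wi clS ES tS by auto
    qed
    show "S \<subseteq> ?h ` ?W"
    proof
      fix s assume s: "s \<in> S"
      have bT: "br s \<in> T" using br_ex[OF s] by blast
      have "(p s, br s) \<in> ?W" using Wi pE[OF s] bT D1(2,3)[OF s] by simp
      moreover have "s = ?h (p s, br s)" using D1(1)[OF s] by simp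
      ultimately show "s \<in> ?h ` ?W" by blast
    qed
  qed
  have hom: "?h (Wmult m m act q r) = m (?h q) (?h r)" if q: "q \<in> ?W" and r: "r \<in> ?W" for q r
  proof -
    obtain e x g y where ex: "q = (e,x)" "r = (g,y)" by (cases q, cases r) auto
    have h1: "e \<in> E" "x \<in> T" "m e (tp x) = e" "m (tp x) e = tp x" using q ex Wi by auto
    have h2: "g \<in> E" "y \<in> T" "m g (tp y) = g" "m (tp y) g = tp y" using r ex Wi by auto
    have S: "e \<in> S" "x \<in> S" "g \<in> S" "y \<in> S" "tp y \<in> S" using h1 h2 ES tS tpT by auto
    have xg: "m x g \<in> S" using clS S by blast
    have aS: "act x g \<in> S" using ES[OF act_in[OF h1(2) h2(1)]] .
    have bxg: "br (m x g) = m x (tp y)" using admx[OF S(2,3)] br_T[OF h1(2)] brE[OF h2(2) h2(1,3,4)] by simp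
    have xg_eq: "m x g = m (act x g) (m x (tp y))" using D1(1)[OF xg] bxg unfolding act_def by simp
    have "m (m e x) (m g y) = m e (m (m x g) y)" using asS S clS by simp
    also have "\<dots> = m e (m (m (act x g) (m x (tp y))) y)" using xg_eq by simp
    also have "\<dots> = m e (m (act x g) (m x (m (tp y) y)))" using asS S aS clS by simp
    also have "\<dots> = m (m e (act x g)) (m x y)" using tpm[OF h2(2)] asS S aS clS by simp
    finally show ?thesis using ex by simp
  qed
  show ?thesis unfolding sg_iso_def bij_betw_def using inj img hom by blast
qed

lemma part2': "construction_hyps T m E m act \<and> sg_iso (Wset T m E m) (Wmult m m act) S m"
  using chyps part2 by blast

end

theorem theorem3p4:
  shows "(\<forall>(S0::'a set) mS I mI act. construction_hyps S0 mS I mI act \<longrightarrow>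
            left_adequate (Wset S0 mS I mI) (Wmult mS mI act)
          \<and> quasi_adequate (Wset S0 mS I mI) (Wmult mS mI act)
          \<and> (\<exists>T. adequate_transversal (Wset S0 mS I mI) (Wmult mS mI act) T
                \<and> admissible (Wset S0 mS I mI) (Wmult mS mI act) T
                \<and> left_ample T (Wmult mS mI act)
                \<and> sg_iso T (Wmult mS mI act) S0 mS
                \<and> ((\<forall>e\<in>I. \<forall>x\<in>S0. act (aplus S0 mS x) e = mI (aplus S0 mS x) e)
                   \<longrightarrow> sg_iso (Iset (Wset S0 mS I mI) (Wmult mS mI act) T) (Wmult mS mI act) I mI)))
       \<and> (\<forall>(S::'b set) m T. left_adequate S m \<and> quasi_adequate S m
            \<and> adequate_transversal S m T \<and> left_ample T m \<and> admissible S m T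
            \<longrightarrow> (\<exists>(S0::'b set) mS I mI act. construction_hyps S0 mS I mI act
                   \<and> sg_iso (Wset S0 mS I mI) (Wmult mS mI act) S m))"
proof (rule conjI)
  show "\<forall>(S0::'a set) mS I mI act. construction_hyps S0 mS I mI act \<longrightarrow>
            left_adequate (Wset S0 mS I mI) (Wmult mS mI act)
          \<and> quasi_adequate (Wset S0 mS I mI) (Wmult mS mI act)
          \<and> (\<exists>T. adequate_transversal (Wset S0 mS I mI) (Wmult mS mI act) T
                \<and> admissible (Wset S0 mS I mI) (Wmult mS mI act) T
                \<and> left_ample T (Wmult mS mI act)
                \<and> sg_iso T (Wmult mS mI act) S0 mS
                \<and> ((\<forall>e\<in>I. \<forall>x\<in>S0. act (aplus S0 mS x) e = mI (aplus S0 mS x) e)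
                   \<longrightarrow> sg_iso (Iset (Wset S0 mS I mI) (Wmult mS mI act) T) (Wmult mS mI act) I mI))"
  proof (intro allI impI)
    fix S0 :: "'a set" and mS I mI act
    assume H: "construction_hyps S0 mS I mI act"
    interpret c: C S0 mS I mI act by unfold_locales (rule H)
    show "left_adequate (Wset S0 mS I mI) (Wmult mS mI act)
          \<and> quasi_adequate (Wset S0 mS I mI) (Wmult mS mI act)
          \<and> (\<exists>T. adequate_transversal (Wset S0 mS I mI) (Wmult mS mI act) T
                \<and> admissible (Wset S0 mS I mI) (Wmult mS mI act) T
                \<and> left_ample T (Wmult mS mI act)
                \<and> sg_iso T (Wmult mS mI act) S0 mS
                \<and> ((\<forall>e\<in>I. \<forall>x\<in>S0. act (aplus S0 mS x) e = mI (aplus S0 mS x) e)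
                   \<longrightarrow> sg_iso (Iset (Wset S0 mS I mI) (Wmult mS mI act) T) (Wmult mS mI act) I mI))"
      by (rule c.part1)
  qed
next
  show "\<forall>(S::'b set) m T. left_adequate S m \<and> quasi_adequate S m
            \<and> adequate_transversal S m T \<and> left_ample T m \<and> admissible S m T
            \<longrightarrow> (\<exists>(S0::'b set) mS I mI act. construction_hyps S0 mS I mI act
                   \<and> sg_iso (Wset S0 mS I mI) (Wmult mS mI act) S m)"
  proof (intro allI impI)
    fix S :: "'b set" and m T
    assume A: "left_adequate S m \<and> quasi_adequate S m
            \<and> adequate_transversal S m T \<and> left_ample T m \<and> admissible S m T"
    interpret d: D S m T by unfold_locales (rule A)
    show "\<exists>(S0::'b set) mS I mI act. construction_hyps S0 mS I mI act
                   \<and> sg_iso (Wset S0 mS I mI) (Wmult mS mI act) S m"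
      using d.part2' by blast
  qed
qed

end
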